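(* Let $\mu$ be a monotone system over $\{0,1\}^V$, $\theta\in(0,1)$, $T_1,T_2\ge1$. Let $\pi^{(t)}_{\mathrm{alg}}$ be the law of $X^{(t)}_{\mathrm{alg}}$ (generated by $\mathcal A_\mu(\theta,T_1,T_2)$) and $\pi^{(t)}_{\mathrm{GD}}$ the law of $X^{(t)}_{\pi\text{-GD}}$, the Glauber dynamics on $\pi$ started from $X^{(0)}_{\pi\text{-GD}}=\mathsf{lift}(\mathbf 1_V)$. Then for every $t\ge0$ (with $t\le T_1T_2$), $\pi^{(t)}_{\mathrm{GD}}\preceq_{\mathrm{sd}}\pi^{(t)}_{\mathrm{alg}}$.
   Context: Monotone system: for every $v$ and all feasible $\sigma\preceq\tau$ in $\{0,1\}^{V\setminus\{v\}}$ (coordinatewise order), $\mu^\sigma_v(1)\le\mu^\tau_v(1)$. Tilted $(\theta*\mu)(\sigma)\propto\mu(\sigma)\theta^{\|\sigma\|_1}$. $\mathsf{lift}$: random map $\{0,1\}^V\to\{0,1,\star\}^V$, independently per coordinate $0\mapsto0$, $1\mapsto\star$ w.p. $1-\theta$, $1\mapsto1$ w.p. $\theta$. $\mathsf{contr}$: $0\mapsto0$, $1,\star\mapsto1$. $\pi$ is the law of $\mathsf{lift}(X)$ for $X\sim\mu$. Glauber dynamics on $\pi$: pick $v$ uniformly, resample $X_v\in\{0,1,\star\}$ from $\pi$ conditioned on $X_{V\setminus\{v\}}$. On $\{0,1,\star\}^V$ use the order $0<1<\star$ and the coordinatewise partial order; $\nu\preceq_{\mathrm{sd}}\nu'$ means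 there is a coupling $(X,Y)$ with $X\sim\nu$, $Y\sim\nu'$, $X\preceq Y$ a.s. Algorithm $\mathcal A_\mu(\theta,T_1,T_2)$: set $X=\mathsf{lift}(\mathbf 1_V)$; repeat $T_1$ times: (a) $X\gets\mathsf{contr}(X)$; (b) $X\gets\mathsf{lift}(X)$, $S=\{v:X_v\ne\star\}$; (c) repeat $T_2$ times: pick $v$ uniformly; if $v\in S$ resample $X_v\sim(\theta*\mu)_v^{\sigma_{V\setminus\{v\}}}$ with $\sigma=\mathsf{contr}(X)$, else keep $X_v=\star$. $X^{(0)}_{\mathrm{alg}}=\mathsf{lift}(\mathbf 1_V)$, $X^{(t)}_{\mathrm{alg}}$ the state after the $t$-th single-site step of (c). *)

theory Defs
  imports "HOL-Probability.Probability"
begin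

datatype spin = Zero | One | Star

fun spin_rank :: "spin \<Rightarrow> nat" where
  "spin_rank Zero = 0" | "spin_rank One = 1" | "spin_rank Star = 2"

instantiation spin :: linorder
begin
definition less_eq_spin :: "spin \<Rightarrow> spin \<Rightarrow> bool" where
  "less_eq_spin x y \<longleftrightarrow> spin_rank x \<le> spin_rank y"
definition less_spin :: "spin \<Rightarrow> spin \<Rightarrow> bool" where
  "less_spin x y \<longleftrightarrow> spin_rank x < spin_rank y"
instance
proof
  fix x y :: spin
  show "x \<le> y \<Longrightarrow> y \<le> x \<Longrightarrow> x = y"
    by (cases x; cases y) (auto simp: less_eq_spin_def)
qed (auto simp: less_eq_spin_def less_spin_def)
end

text \<open>Configurations on the finite vertex set V (= UNIV of the finite type 'v):
  'v \<Rightarrow> bool is {0,1}^V (False = 0, True = 1; the order on bool is 0 < 1),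
  'v \<Rightarrow> spin is {0,1,star}^V.\<close>

definition cyl :: "'v \<Rightarrow> ('v \<Rightarrow> 'a) \<Rightarrow> ('v \<Rightarrow> 'a) set" where
  "cyl v \<sigma> = {x. \<forall>u. u \<noteq> v \<longrightarrow> x u = \<sigma> u}"

definition feasible :: "('v \<Rightarrow> 'a) pmf \<Rightarrow> 'v \<Rightarrow> ('v \<Rightarrow> 'a) \<Rightarrow> bool" where
  "feasible p v \<sigma> \<longleftrightarrow> measure_pmf.prob p (cyl v \<sigma>) > 0"

text \<open>Law of X_v under p conditioned on X_{V-{v}} = \<sigma>_{V-{v}}
  (convention when infeasible: point mass at \<sigma> v; never used on reachable states).\<close>
definition cond_site :: "('v \<Rightarrow> 'a) pmf \<Rightarrow> 'v \<Rightarrow> ('v \<Rightarrow> 'a) \<Rightarrow> 'a pmf" where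
  "cond_site p v \<sigma> =
     (if feasible p v \<sigma> then map_pmf (\<lambda>x. x v) (cond_pmf p (cyl v \<sigma>)) else return_pmf (\<sigma> v))"

definition cond_one :: "('v \<Rightarrow> bool) pmf \<Rightarrow> 'v \<Rightarrow> ('v \<Rightarrow> bool) \<Rightarrow> real" where
  "cond_one \<mu> v \<sigma> = measure_pmf.prob \<mu> {x \<in> cyl v \<sigma>. x v} / measure_pmf.prob \<mu> (cyl v \<sigma>)"

definition monotone_system :: "('v \<Rightarrow> bool) pmf \<Rightarrow> bool" where
  "monotone_system \<mu> \<longleftrightarrow>
     (\<forall>v \<sigma> \<tau>. feasible \<mu> v \<sigma> \<and> feasible \<mu> v \<tau> \<and> (\<forall>u. u \<noteq> v \<longrightarrow> \<sigma> u \<le> \<tau> u)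
        \<longrightarrow> cond_one \<mu> v \<sigma> \<le> cond_one \<mu> v \<tau>)"

definition tilt :: "real \<Rightarrow> ('v::finite \<Rightarrow> bool) pmf \<Rightarrow> ('v \<Rightarrow> bool) pmf" where
  "tilt \<theta> \<mu> = embed_pmf (\<lambda>\<sigma>. pmf \<mu> \<sigma> * \<theta> ^ card {v. \<sigma> v} /
       (\<Sum>\<tau>\<in>UNIV. pmf \<mu> \<tau> * \<theta> ^ card {v. \<tau> v}))"

definition lift :: "real \<Rightarrow> ('v::finite \<Rightarrow> bool) \<Rightarrow> ('v \<Rightarrow> spin) pmf" where
  "lift \<theta> x = Pi_pmf UNIV Zero (\<lambda>v. if x v
       then map_pmf (\<lambda>b. if b then One else Star) (bernoulli_pmf \<theta>)
       else return_pmf Zero)"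

definition contr :: "('v \<Rightarrow> spin) \<Rightarrow> ('v \<Rightarrow> bool)" where
  "contr X = (\<lambda>v. X v \<noteq> Zero)"

definition lifted :: "real \<Rightarrow> ('v::finite \<Rightarrow> bool) pmf \<Rightarrow> ('v \<Rightarrow> spin) pmf" where
  "lifted \<theta> \<mu> = bind_pmf \<mu> (lift \<theta>)"

definition gd_step :: "('v::finite \<Rightarrow> 'a) pmf \<Rightarrow> ('v \<Rightarrow> 'a) \<Rightarrow> ('v \<Rightarrow> 'a) pmf" where
  "gd_step p X = bind_pmf (pmf_of_set UNIV) (\<lambda>v. map_pmf (\<lambda>a. X(v := a)) (cond_site p v X))"

fun gd_law :: "('v::finite \<Rightarrow> 'a) pmf \<Rightarrow> ('v \<Rightarrow> 'a) pmf \<Rightarrow> nat \<Rightarrow> ('v \<Rightarrow> 'a) pmf" where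
  "gd_law p X0 0 = X0"
| "gd_law p X0 (Suc t) = bind_pmf (gd_law p X0 t) (gd_step p)"

text \<open>One single-site step of (c). During a round, S = {v. X v \<noteq> Star} throughout
  (resampled sites get values in {0,1}, sites outside S stay star).\<close>
definition alg_step :: "real \<Rightarrow> ('v::finite \<Rightarrow> bool) pmf \<Rightarrow> ('v \<Rightarrow> spin) \<Rightarrow> ('v \<Rightarrow> spin) pmf" where
  "alg_step \<theta> \<mu> X = bind_pmf (pmf_of_set UNIV) (\<lambda>v.
     if X v = Star then return_pmf X
     else map_pmf (\<lambda>b. X(v := (if b then One else Zero))) (cond_site (tilt \<theta> \<mu>) v (contr X)))"

text \<open>Steps (a)+(b) at the start of a round.\<close>
definition alg_refresh :: "real \<Rightarrow> ('v::finite \<Rightarrow> spin) \<Rightarrow> ('v \<Rightarrow> spin) pmf" where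
  "alg_refresh \<theta> X = lift \<theta> (contr X)"

text \<open>Law of X^(t)_alg: state after the t-th single-site step; the (t+1)-th step is the first
  step of a new round iff t mod T2 = 0, in which case (a),(b) are performed before it.\<close>
fun alg_law :: "real \<Rightarrow> ('v::finite \<Rightarrow> bool) pmf \<Rightarrow> nat \<Rightarrow> nat \<Rightarrow> ('v \<Rightarrow> spin) pmf" where
  "alg_law \<theta> \<mu> T2 0 = lift \<theta> (\<lambda>_. True)"
| "alg_law \<theta> \<mu> T2 (Suc t) = bind_pmf (alg_law \<theta> \<mu> T2 t) (\<lambda>X.
     if t mod T2 = 0 then bind_pmf (alg_refresh \<theta> X) (alg_step \<theta> \<mu>) else alg_step \<theta> \<mu> X)"

end

theory Submission
  imports Defs
begin

instance spin :: finite
proof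
  have "(UNIV :: spin set) = {Zero, One, Star}" using spin.exhaust by auto
  then show "finite (UNIV :: spin set)" by (metis finite.emptyI finite.insertI)
qed

lemma UNIV_spin: "(UNIV :: spin set) = {Zero, One, Star}" using spin.exhaust by auto

lemma spin_le_iff: "(a::spin) \<le> b \<longleftrightarrow> spin_rank a \<le> spin_rank b" by (simp add: less_eq_spin_def)

lemma Star_top[simp]: "(a::spin) \<le> Star" by (cases a) (auto simp: less_eq_spin_def)
lemma Zero_bot[simp]: "Zero \<le> (a::spin)" by (cases a) (auto simp: less_eq_spin_def)
lemma Star_le_iff[simp]: "Star \<le> (a::spin) \<longleftrightarrow> a = Star" by (cases a) (auto simp: less_eq_spin_def)

definition lp :: "real \<Rightarrow> bool \<Rightarrow> spin \<Rightarrow> real" where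
  "lp \<theta> b a = (if b then (if a = One then \<theta> else if a = Star then 1 - \<theta> else 0)
                 else (if a = Zero then 1 else 0))"

lemma pmf_lift_comp:
  assumes "0 \<le> \<theta>" "\<theta> \<le> 1"
  shows "pmf (if b then map_pmf (\<lambda>b. if b then One else Star) (bernoulli_pmf \<theta>) else return_pmf Zero) a
         = lp \<theta> b a"
proof -
  let ?f = "\<lambda>b. if b then One else Star"
  have inj: "inj ?f" by (auto simp: inj_def split: if_splits)
  show ?thesis
  proof (cases b)
    case True
    show ?thesis
    proof (cases a)
      case Zero
      have "Zero \<notin> ?f ` set_pmf (bernoulli_pmf \<theta>)" by auto
      then show ?thesis using True Zero by (simp add: pmf_map_outside lp_def)
    next
      case One
      have "pmf (map_pmf ?f (bernoulli_pmf \<theta>)) (?f True) = pmf (bernoulli_pmf \<theta>) True"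
        by (rule pmf_map_inj'[OF inj])
      then show ?thesis using True One assms by (simp add: lp_def)
    next
      case Star
      have "pmf (map_pmf ?f (bernoulli_pmf \<theta>)) (?f False) = pmf (bernoulli_pmf \<theta>) False"
        by (rule pmf_map_inj'[OF inj])
      then show ?thesis using True Star assms by (simp add: lp_def)
    qed
  next
    case False
    then show ?thesis by (cases a) (auto simp: lp_def)
  qed
qed

lemma pmf_lift:
  assumes "0 \<le> \<theta>" "\<theta> \<le> 1"
  shows "pmf (lift \<theta> z) X = (\<Prod>u\<in>UNIV. lp \<theta> (z u) (X u))"
  unfolding lift_def by (subst pmf_Pi') (auto simp: pmf_lift_comp[OF assms])

lemma lp_nonneg: "0 \<le> \<theta> \<Longrightarrow> \<theta> \<le> 1 \<Longrightarrow> 0 \<le> lp \<theta> b a"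
  by (auto simp: lp_def)

lemma lp_pos_iff: "0 < \<theta> \<Longrightarrow> \<theta> < 1 \<Longrightarrow> lp \<theta> b a > 0 \<longleftrightarrow> b = (a \<noteq> Zero)"
  by (cases a) (auto simp: lp_def)

lemma lp_zero_iff: "0 < \<theta> \<Longrightarrow> \<theta> < 1 \<Longrightarrow> lp \<theta> b a = 0 \<longleftrightarrow> b \<noteq> (a \<noteq> Zero)"
  by (cases a) (auto simp: lp_def)

lemma lp_sum: "(\<Sum>a\<in>UNIV. lp \<theta> b a) = 1"
  by (auto simp: UNIV_spin lp_def)

lemma pmf_lift_pos_iff:
  assumes "0 < \<theta>" "\<theta> < 1"
  shows "pmf (lift \<theta> z) X > 0 \<longleftrightarrow> contr X = z"
proof -
  have nn: "\<And>u. lp \<theta> (z u) (X u) \<ge> 0" using assms by (intro lp_nonneg) auto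
  have "pmf (lift \<theta> z) X > 0 \<longleftrightarrow> (\<forall>u. lp \<theta> (z u) (X u) > 0)"
  proof
    assume "pmf (lift \<theta> z) X > 0"
    moreover have "pmf (lift \<theta> z) X = (\<Prod>u\<in>UNIV. lp \<theta> (z u) (X u))"
      using assms by (simp add: pmf_lift)
    ultimately have "(\<Prod>u\<in>UNIV. lp \<theta> (z u) (X u)) \<noteq> 0" by linarith
    then have "\<forall>u. lp \<theta> (z u) (X u) \<noteq> 0" by (simp add: prod_zero_iff)
    then show "\<forall>u. lp \<theta> (z u) (X u) > 0" using nn by (simp add: less_le)
  next
    assume "\<forall>u. lp \<theta> (z u) (X u) > 0"
    then have "(\<Prod>u\<in>UNIV. lp \<theta> (z u) (X u)) > 0" by (intro prod_pos) auto
    then show "pmf (lift \<theta> z) X > 0" using assms by (simp add: pmf_lift)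
  qed
  also have "\<dots> \<longleftrightarrow> contr X = z"
    using assms by (auto simp: lp_pos_iff contr_def fun_eq_iff)
  finally show ?thesis .
qed

lemma set_pmf_lift:
  assumes "0 < \<theta>" "\<theta> < 1"
  shows "X \<in> set_pmf (lift \<theta> z) \<longleftrightarrow> contr X = z"
  using pmf_lift_pos_iff[OF assms, of z X] pmf_nonneg[of "lift \<theta> z" X] by (auto simp: set_pmf_iff)

lemma pmf_bind_fin:
  fixes M :: "'a::finite pmf"
  shows "pmf (bind_pmf M f) x = (\<Sum>y\<in>UNIV. pmf M y * pmf (f y) x)"
  by (simp add: pmf_bind integral_measure_pmf_real[where A=UNIV] mult.commute)

lemma cyl_eq: "cyl v x = range (\<lambda>a. x(v := a))"
proof (intro set_eqI iffI)
  fix y assume "y \<in> cyl v x"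
  then have "y = x(v := y v)" by (auto simp: cyl_def fun_eq_iff)
  then show "y \<in> range (\<lambda>a. x(v := a))" by blast
next
  fix y assume "y \<in> range (\<lambda>a. x(v := a))"
  then show "y \<in> cyl v x" by (auto simp: cyl_def)
qed

lemma prob_cyl:
  fixes p :: "('v \<Rightarrow> 'a::finite) pmf"
  shows "measure_pmf.prob p (cyl v x) = (\<Sum>a\<in>UNIV. pmf p (x(v := a)))"
proof -
  have inj: "inj (\<lambda>a. x(v := a))" by (auto simp: inj_def fun_eq_iff dest: spec[where x=v])
  have "measure_pmf.prob p (cyl v x) = sum (pmf p) (range (\<lambda>a. x(v := a)))"
    by (simp add: cyl_eq measure_measure_pmf_finite)
  also have "\<dots> = (\<Sum>a\<in>UNIV. pmf p (x(v := a)))"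
    by (subst sum.reindex[OF inj]) (simp add: o_def)
  finally show ?thesis .
qed

lemma sum_single:
  assumes "finite A" "a \<in> A" "\<And>x. x \<in> A \<Longrightarrow> x \<noteq> a \<Longrightarrow> f x = 0"
  shows "sum f A = f a"
proof -
  have "sum f A = f a + sum f (A - {a})" using assms by (simp add: sum.remove)
  also have "sum f (A - {a}) = 0" using assms by (intro sum.neutral) auto
  finally show ?thesis by simp
qed

lemma inj_upd: "inj (\<lambda>a. x(v := a))"
  by (auto simp: inj_def fun_eq_iff dest: spec[where x=v])

lemma pmf_map_upd:
  "pmf (map_pmf (\<lambda>a. X(v := a)) M) X' = (if X \<in> cyl v X' then pmf M (X' v) else 0)"
proof (cases "X \<in> cyl v X'")
  case True
  then have "X' = X(v := X' v)" by (auto simp: cyl_def fun_eq_iff)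
  then have "pmf (map_pmf (\<lambda>a. X(v := a)) M) X' = pmf (map_pmf (\<lambda>a. X(v := a)) M) (X(v := X' v))"
    by simp
  also have "\<dots> = pmf M (X' v)" by (rule pmf_map_inj'[OF inj_upd])
  finally show ?thesis using True by simp
next
  case False
  then have "X' \<notin> (\<lambda>a. X(v := a)) ` set_pmf M" by (auto simp: cyl_def)
  then show ?thesis using False by (simp add: pmf_map_outside)
qed

lemma pmf_bind_upd:
  fixes G :: "('v::finite \<Rightarrow> 'a::finite) pmf"
  shows "pmf (bind_pmf G (\<lambda>X. map_pmf (\<lambda>a. X(v := a)) (D X))) X'
       = (\<Sum>a\<in>UNIV. pmf G (X'(v := a)) * pmf (D (X'(v := a))) (X' v))"
proof -
  have "pmf (bind_pmf G (\<lambda>X. map_pmf (\<lambda>a. X(v := a)) (D X))) X'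
      = (\<Sum>X\<in>UNIV. pmf G X * (if X \<in> cyl v X' then pmf (D X) (X' v) else 0))"
    by (simp add: pmf_bind_fin pmf_map_upd)
  also have "\<dots> = (\<Sum>X\<in>cyl v X'. pmf G X * pmf (D X) (X' v))"
    by (simp add: sum.If_cases if_distrib)
  also have "\<dots> = (\<Sum>a\<in>UNIV. pmf G (X'(v := a)) * pmf (D (X'(v := a))) (X' v))"
    unfolding cyl_eq by (subst sum.reindex[OF inj_upd]) (simp add: o_def)
  finally show ?thesis .
qed

lemma contr_upd: "contr (Y(v := a)) = (contr Y)(v := (a \<noteq> Zero))"
  by (auto simp: contr_def)

definition Rst :: "real \<Rightarrow> ('v::finite \<Rightarrow> bool) \<Rightarrow> ('v \<Rightarrow> spin) \<Rightarrow> 'v \<Rightarrow> real" where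
  "Rst \<theta> z X v = (\<Prod>u\<in>UNIV - {v}. lp \<theta> (z u) (X u))"

lemma Rst_upd1[simp]: "Rst \<theta> (z(v := b)) X v = Rst \<theta> z X v"
  unfolding Rst_def by (rule prod.cong) auto

lemma Rst_upd2[simp]: "Rst \<theta> z (X(v := a)) v = Rst \<theta> z X v"
  unfolding Rst_def by (rule prod.cong) auto

lemma pmf_lift_split:
  assumes "0 \<le> \<theta>" "\<theta> \<le> 1"
  shows "pmf (lift \<theta> z) X = lp \<theta> (z v) (X v) * Rst \<theta> z X v"
  unfolding pmf_lift[OF assms] Rst_def by (subst prod.remove[of UNIV v]) auto

lemma Rst_pos:
  assumes "0 < \<theta>" "\<theta> < 1"
  shows "Rst \<theta> (contr Y) Y v > 0"
  unfolding Rst_def using assms by (intro prod_pos) (auto simp: lp_pos_iff contr_def)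

lemma Rst_nonneg:
  assumes "0 \<le> \<theta>" "\<theta> \<le> 1"
  shows "Rst \<theta> z Y v \<ge> 0"
  unfolding Rst_def using assms by (intro prod_nonneg lp_nonneg) auto

lemma pmf_bind_lift:
  assumes "0 < \<theta>" "\<theta> < 1"
  shows "pmf (bind_pmf Z (lift \<theta>)) X = pmf Z (contr X) * pmf (lift \<theta> (contr X)) X"
proof -
  have "pmf (bind_pmf Z (lift \<theta>)) X = (\<Sum>z\<in>UNIV. pmf Z z * pmf (lift \<theta> z) X)"
    by (rule pmf_bind_fin)
  also have "\<dots> = pmf Z (contr X) * pmf (lift \<theta> (contr X)) X"
  proof (rule sum_single)
    fix z assume "z \<noteq> contr X"
    then have "pmf (lift \<theta> z) X = 0"
      using pmf_lift_pos_iff[OF assms, of z X] pmf_nonneg[of "lift \<theta> z" X] by auto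
    then show "pmf Z z * pmf (lift \<theta> z) X = 0" by simp
  qed auto
  finally show ?thesis .
qed

lemma pmf_bind_lift_upd:
  assumes "0 < \<theta>" "\<theta> < 1"
  shows "pmf (bind_pmf Z (lift \<theta>)) (Y(v := a))
       = pmf Z ((contr Y)(v := (a \<noteq> Zero))) * lp \<theta> (a \<noteq> Zero) a * Rst \<theta> (contr Y) Y v"
  using assms by (simp add: pmf_bind_lift contr_upd pmf_lift_split[where v=v])

lemma feasible_iff:
  fixes p :: "('v \<Rightarrow> 'a::finite) pmf"
  shows "feasible p v X \<longleftrightarrow> (\<Sum>a\<in>UNIV. pmf p (X(v := a))) > 0"
  by (simp add: feasible_def prob_cyl)

lemma pmf_cond_site:
  fixes p :: "('v::finite \<Rightarrow> 'a::finite) pmf"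
  assumes "feasible p v X"
  shows "pmf (cond_site p v X) a = pmf p (X(v := a)) / (\<Sum>b\<in>UNIV. pmf p (X(v := b)))"
proof -
  have pos: "measure_pmf.prob p (cyl v X) \<noteq> 0" using assms by (simp add: feasible_def)
  then have ne: "set_pmf p \<inter> cyl v X \<noteq> {}" by (simp add: measure_pmf_zero_iff)
  have "pmf (cond_site p v X) a = measure_pmf.prob (cond_pmf p (cyl v X)) ((\<lambda>x. x v) -` {a})"
    using assms by (simp add: cond_site_def pmf_map)
  also have "\<dots> = (\<Sum>x\<in>(\<lambda>x. x v) -` {a}. pmf (cond_pmf p (cyl v X)) x)"
    by (simp add: measure_measure_pmf_finite)
  also have "\<dots> = (\<Sum>x\<in>UNIV. if x = X(v := a) then pmf p (X(v := a)) / measure_pmf.prob p (cyl v X) else 0)"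
  proof -
    have "(\<Sum>x\<in>(\<lambda>x. x v) -` {a}. pmf (cond_pmf p (cyl v X)) x)
        = (\<Sum>x\<in>UNIV. if x v = a then pmf (cond_pmf p (cyl v X)) x else 0)"
      by (simp add: sum.If_cases vimage_def Int_def)
    also have "\<dots> = (\<Sum>x\<in>UNIV. if x = X(v := a) then pmf p (X(v := a)) / measure_pmf.prob p (cyl v X) else 0)"
    proof (rule sum.cong[OF refl])
      fix x
      have "(x v = a \<and> x \<in> cyl v X) \<longleftrightarrow> x = X(v := a)"
        by (auto simp: cyl_def fun_eq_iff)
      then show "(if x v = a then pmf (cond_pmf p (cyl v X)) x else 0)
          = (if x = X(v := a) then pmf p (X(v := a)) / measure_pmf.prob p (cyl v X) else 0)"
        using pos by (auto simp: pmf_cond[OF ne])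
    qed
    finally show ?thesis .
  qed
  also have "\<dots> = pmf p (X(v := a)) / measure_pmf.prob p (cyl v X)" by simp
  finally show ?thesis by (simp add: prob_cyl)
qed

lemma cyl_cong: "\<forall>u. u \<noteq> v \<longrightarrow> x u = y u \<Longrightarrow> cyl v x = cyl v y"
  by (auto simp: cyl_def)

lemma cond_site_cong:
  assumes "\<forall>u. u \<noteq> v \<longrightarrow> x u = y u" "feasible p v x"
  shows "cond_site p v x = cond_site p v y"
  using assms cyl_cong[OF assms(1)] by (simp add: cond_site_def feasible_def)

lemma sum_pmf_UNIV: "(\<Sum>a\<in>(UNIV::'a::finite set). pmf p a) = 1"
  by (rule sum_pmf_eq_1) auto

lemma rel_pmf_embedI:
  fixes p :: "'a::finite pmf" and q :: "'b::finite pmf" and w :: "'a \<times> 'b \<Rightarrow> real"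
  assumes nonneg: "\<And>x. 0 \<le> w x"
    and row: "\<And>a. (\<Sum>b\<in>UNIV. w (a, b)) = pmf p a"
    and col: "\<And>b. (\<Sum>a\<in>UNIV. w (a, b)) = pmf q b"
    and supp: "\<And>a b. w (a, b) \<noteq> 0 \<Longrightarrow> R a b"
  shows "rel_pmf R p q"
proof -
  have tot: "(\<Sum>x\<in>UNIV. w x) = 1"
  proof -
    have "(\<Sum>x\<in>UNIV. w x) = (\<Sum>x\<in>UNIV \<times> UNIV. w x)" by (simp add: UNIV_Times_UNIV)
    also have "\<dots> = (\<Sum>a\<in>UNIV. \<Sum>b\<in>UNIV. w (a, b))" by (simp add: sum.cartesian_product)
    also have "\<dots> = 1" by (simp add: row sum_pmf_UNIV)
    finally show ?thesis .
  qed
  have pw: "pmf (embed_pmf w) x = w x" for x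
  proof (rule pmf_embed_pmf)
    show "0 \<le> w x" for x by (rule nonneg)
    have "(\<integral>\<^sup>+ x. ennreal (w x) \<partial>count_space UNIV) = (\<Sum>x\<in>UNIV. ennreal (w x))"
      by (simp add: nn_integral_count_space_finite)
    also have "\<dots> = ennreal (\<Sum>x\<in>UNIV. w x)" by (rule sum_ennreal) (rule nonneg)
    finally show "(\<integral>\<^sup>+ x. ennreal (w x) \<partial>count_space UNIV) = 1" by (simp add: tot)
  qed
  show ?thesis
  proof (rule rel_pmf.intros[where pq="embed_pmf w"])
    fix x y assume "(x, y) \<in> set_pmf (embed_pmf w)"
    then show "R x y" by (intro supp) (simp add: set_pmf_iff pw)
  next
    show "map_pmf fst (embed_pmf w) = p"
    proof (rule pmf_eqI)
      fix a
      have "pmf (map_pmf fst (embed_pmf w)) a = (\<Sum>x\<in>fst -` {a}. w x)"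
        by (simp add: pmf_map measure_measure_pmf_finite pw)
      also have "fst -` {a} = Pair a ` UNIV" by auto
      also have "(\<Sum>x\<in>Pair a ` UNIV. w x) = (\<Sum>b\<in>UNIV. w (a, b))"
        by (subst sum.reindex) (auto simp: inj_def)
      finally show "pmf (map_pmf fst (embed_pmf w)) a = pmf p a" by (simp add: row)
    qed
  next
    show "map_pmf snd (embed_pmf w) = q"
    proof (rule pmf_eqI)
      fix b
      have "pmf (map_pmf snd (embed_pmf w)) b = (\<Sum>x\<in>snd -` {b}. w x)"
        by (simp add: pmf_map measure_measure_pmf_finite pw)
      also have "snd -` {b} = (\<lambda>a. (a, b)) ` UNIV" by auto
      also have "(\<Sum>x\<in>(\<lambda>a. (a, b)) ` UNIV. w x) = (\<Sum>a\<in>UNIV. w (a, b))"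
        by (subst sum.reindex) (auto simp: inj_def)
      finally show "pmf (map_pmf snd (embed_pmf w)) b = pmf q b" by (simp add: col)
    qed
  qed
qed

lemma bool_sd:
  fixes p q :: "bool pmf"
  assumes "pmf p True \<le> pmf q True"
  shows "rel_pmf (\<le>) p q"
proof -
  have sp: "pmf p False + pmf p True = 1" using sum_pmf_UNIV[of p] by (simp add: UNIV_bool)
  have sq: "pmf q False + pmf q True = 1" using sum_pmf_UNIV[of q] by (simp add: UNIV_bool)
  define w where "w = (\<lambda>(a::bool, b::bool). if \<not> a \<and> \<not> b then pmf q False
      else if \<not> a \<and> b then pmf p False - pmf q False else if a \<and> b then pmf p True else 0)"
  show ?thesis
  proof (rule rel_pmf_embedI[where w=w])
    show "0 \<le> w x" for x using assms sp sq by (cases x) (auto simp: w_def)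
    show "(\<Sum>b\<in>UNIV. w (a, b)) = pmf p a" for a by (cases a) (auto simp: w_def UNIV_bool)
    show "(\<Sum>a\<in>UNIV. w (a, b)) = pmf q b" for b using sp sq by (cases b) (auto simp: w_def UNIV_bool)
    show "w (a, b) \<noteq> 0 \<Longrightarrow> a \<le> b" for a b by (auto simp: w_def split: if_splits)
  qed
qed

lemma spin_sd:
  fixes p q :: "spin pmf"
  assumes "pmf p Star \<le> pmf q Star" "pmf q Zero \<le> pmf p Zero"
  shows "rel_pmf (\<le>) p q"
proof -
  have sp: "pmf p Zero + pmf p One + pmf p Star = 1" using sum_pmf_UNIV[of p] by (simp add: UNIV_spin)
  have sq: "pmf q Zero + pmf q One + pmf q Star = 1" using sum_pmf_UNIV[of q] by (simp add: UNIV_spin)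
  define m where "m = min (pmf p Zero - pmf q Zero) (pmf q One)"
  define w where "w = (\<lambda>(a::spin, b::spin).
      if a = Zero \<and> b = Zero then pmf q Zero
      else if a = Zero \<and> b = One then m
      else if a = Zero \<and> b = Star then pmf p Zero - pmf q Zero - m
      else if a = One \<and> b = One then pmf q One - m
      else if a = One \<and> b = Star then pmf p One - pmf q One + m
      else if a = Star \<and> b = Star then pmf p Star else 0)"
  have m1: "m \<le> pmf p Zero - pmf q Zero" "m \<le> pmf q One" by (auto simp: m_def)
  have m2: "m = pmf p Zero - pmf q Zero \<or> m = pmf q One" by (auto simp: m_def)
  have m3: "0 \<le> m" using assms by (auto simp: m_def)
  have nn: "pmf p One - pmf q One + m \<ge> 0" using m2 sp sq assms by auto
  show ?thesis
  proof (rule rel_pmf_embedI[where w=w])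
    show "0 \<le> w x" for x using assms m1 m3 nn by (cases x) (auto simp: w_def)
    show "(\<Sum>b\<in>UNIV. w (a, b)) = pmf p a" for a by (cases a) (auto simp: w_def UNIV_spin)
    show "(\<Sum>a\<in>UNIV. w (a, b)) = pmf q b" for b using sp sq by (cases b) (auto simp: w_def UNIV_spin)
    show "w (a, b) \<noteq> 0 \<Longrightarrow> a \<le> b" for a b
      by (cases a; cases b) (auto simp: w_def less_eq_spin_def split: if_splits)
  qed
qed

lemma frac_le_iff: "(0::real) < b \<Longrightarrow> 0 < d \<Longrightarrow> a / b \<le> c / d \<longleftrightarrow> a * d \<le> c * b"
  by (simp add: divide_le_eq le_divide_eq field_simps)

definition Zt :: "real \<Rightarrow> ('v::finite \<Rightarrow> bool) pmf \<Rightarrow> real" where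
  "Zt \<theta> \<mu> = (\<Sum>\<tau>\<in>UNIV. pmf \<mu> \<tau> * \<theta> ^ card {v. \<tau> v})"

lemma Zt_pos:
  assumes "0 < \<theta>"
  shows "Zt \<theta> \<mu> > 0"
proof -
  obtain \<tau> where "\<tau> \<in> set_pmf \<mu>" by (meson ex_in_conv set_pmf_not_empty)
  then have "pmf \<mu> \<tau> > 0" by (simp add: pmf_positive)
  then show ?thesis unfolding Zt_def using assms
    by (intro sum_pos2[of UNIV \<tau>]) auto
qed

lemma pmf_tilt:
  assumes "0 < \<theta>"
  shows "pmf (tilt \<theta> \<mu>) \<sigma> = pmf \<mu> \<sigma> * \<theta> ^ card {v. \<sigma> v} / Zt \<theta> \<mu>"
  unfolding tilt_def Zt_def[symmetric]
proof (rule pmf_embed_pmf)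
  show "0 \<le> pmf \<mu> x * \<theta> ^ card {v. x v} / Zt \<theta> \<mu>" for x
    using assms Zt_pos[OF assms, of \<mu>] by auto
  have "(\<integral>\<^sup>+ x. ennreal (pmf \<mu> x * \<theta> ^ card {v. x v} / Zt \<theta> \<mu>) \<partial>count_space UNIV)
      = (\<Sum>x\<in>UNIV. ennreal (pmf \<mu> x * \<theta> ^ card {v. x v} / Zt \<theta> \<mu>))"
    by (simp add: nn_integral_count_space_finite)
  also have "\<dots> = ennreal (\<Sum>x\<in>UNIV. pmf \<mu> x * \<theta> ^ card {v. x v} / Zt \<theta> \<mu>)"
    using assms Zt_pos[OF assms, of \<mu>] by (intro sum_ennreal) auto
  also have "(\<Sum>x\<in>UNIV. pmf \<mu> x * \<theta> ^ card {v. x v} / Zt \<theta> \<mu>) = 1"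
    using Zt_pos[OF assms, of \<mu>] by (simp add: sum_divide_distrib[symmetric] Zt_def)
  finally show "(\<integral>\<^sup>+ x. ennreal (pmf \<mu> x * \<theta> ^ card {v. x v} / Zt \<theta> \<mu>) \<partial>count_space UNIV) = 1"
    by simp
qed

lemma pmf_tilt_pos_iff:
  assumes "0 < \<theta>"
  shows "pmf (tilt \<theta> \<mu>) \<sigma> > 0 \<longleftrightarrow> pmf \<mu> \<sigma> > 0"
  using assms Zt_pos[OF assms, of \<mu>] pmf_nonneg[of \<mu> \<sigma>]
  by (auto simp: pmf_tilt zero_less_mult_iff zero_less_divide_iff)

lemma card_upd_True:
  fixes \<sigma> :: "'v::finite \<Rightarrow> bool"
  shows "card {u. (\<sigma>(v := True)) u} = Suc (card {u. (\<sigma>(v := False)) u})"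
proof -
  have "{u. (\<sigma>(v := True)) u} = insert v {u. (\<sigma>(v := False)) u}" by auto
  then show ?thesis by (simp add: card_insert_disjoint)
qed

lemma sum_bool: "(\<Sum>b\<in>UNIV. f b) = f False + (f True :: real)"
  by (simp add: UNIV_bool)

lemma sum_spin: "(\<Sum>b\<in>UNIV. f b) = f Zero + f One + (f Star :: real)"
  by (simp add: UNIV_spin)

lemma feasible_bool:
  "feasible \<mu> v \<sigma> \<longleftrightarrow> pmf \<mu> (\<sigma>(v := False)) + pmf \<mu> (\<sigma>(v := True)) > 0"
  by (simp add: feasible_iff sum_bool)

lemma feasible_tilt:
  assumes "0 < \<theta>" "feasible \<mu> v \<sigma>"
  shows "feasible (tilt \<theta> \<mu>) v \<sigma>"
proof -
  have "pmf \<mu> (\<sigma>(v := False)) > 0 \<or> pmf \<mu> (\<sigma>(v := True)) > 0"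
    using assms(2) pmf_nonneg[of \<mu>] by (auto simp: feasible_bool add_pos_nonneg)
  then have "pmf (tilt \<theta> \<mu>) (\<sigma>(v := False)) > 0 \<or> pmf (tilt \<theta> \<mu>) (\<sigma>(v := True)) > 0"
    using pmf_tilt_pos_iff[OF assms(1)] by blast
  then show ?thesis using pmf_nonneg[of "tilt \<theta> \<mu>"]
    by (auto simp: feasible_bool intro: add_pos_nonneg add_nonneg_pos)
qed

lemma pmf_cond_tilt:
  assumes "0 < \<theta>" "feasible \<mu> v \<sigma>"
  shows "pmf (cond_site (tilt \<theta> \<mu>) v \<sigma>) b
     = (if b then \<theta> * pmf \<mu> (\<sigma>(v := True)) else pmf \<mu> (\<sigma>(v := False)))
       / (pmf \<mu> (\<sigma>(v := False)) + \<theta> * pmf \<mu> (\<sigma>(v := True)))"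
proof -
  define k where "k = card {u. (\<sigma>(v := False)) u}"
  define m0 where "m0 = pmf \<mu> (\<sigma>(v := False))"
  define m1 where "m1 = pmf \<mu> (\<sigma>(v := True))"
  have Z: "Zt \<theta> \<mu> > 0" by (rule Zt_pos[OF assms(1)])
  have t0: "pmf (tilt \<theta> \<mu>) (\<sigma>(v := False)) = m0 * \<theta> ^ k / Zt \<theta> \<mu>"
    unfolding m0_def k_def by (rule pmf_tilt[OF assms(1)])
  have "pmf (tilt \<theta> \<mu>) (\<sigma>(v := True)) = m1 * \<theta> ^ card {u. (\<sigma>(v := True)) u} / Zt \<theta> \<mu>"
    unfolding m1_def by (rule pmf_tilt[OF assms(1)])
  also have "\<dots> = \<theta> * m1 * \<theta> ^ k / Zt \<theta> \<mu>"
    unfolding card_upd_True k_def[symmetric] by simp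
  finally have t1: "pmf (tilt \<theta> \<mu>) (\<sigma>(v := True)) = \<theta> * m1 * \<theta> ^ k / Zt \<theta> \<mu>" .
  have tk: "\<theta> ^ k > 0" using assms by simp
  have "pmf (cond_site (tilt \<theta> \<mu>) v \<sigma>) b
      = pmf (tilt \<theta> \<mu>) (\<sigma>(v := b)) / (pmf (tilt \<theta> \<mu>) (\<sigma>(v := False)) + pmf (tilt \<theta> \<mu>) (\<sigma>(v := True)))"
    using feasible_tilt[OF assms] by (simp add: pmf_cond_site sum_bool)
  also have "\<dots> = (if b then \<theta> * m1 else m0) / (m0 + \<theta> * m1)"
  proof -
    define c where "c = \<theta> ^ k / Zt \<theta> \<mu>"
    have c: "c > 0" using Z tk by (simp add: c_def)
    have e0: "pmf (tilt \<theta> \<mu>) (\<sigma>(v := False)) = m0 * c" by (simp add: t0 c_def)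
    have e1: "pmf (tilt \<theta> \<mu>) (\<sigma>(v := True)) = (\<theta> * m1) * c" by (simp add: t1 c_def)
    have d: "m0 * c + (\<theta> * m1) * c = (m0 + \<theta> * m1) * c" by (simp add: algebra_simps)
    have cn: "c \<noteq> 0" using c by simp
    show ?thesis by (cases b) (simp_all add: e0 e1 d cn)
  qed
  finally show ?thesis by (simp add: m0_def m1_def)
qed

lemma cond_one_eq:
  assumes "feasible \<mu> v \<sigma>"
  shows "cond_one \<mu> v \<sigma> = pmf \<mu> (\<sigma>(v := True)) / (pmf \<mu> (\<sigma>(v := False)) + pmf \<mu> (\<sigma>(v := True)))"
proof -
  have "{x \<in> cyl v \<sigma>. x v} = {\<sigma>(v := True)}" by (auto simp: cyl_def fun_eq_iff)
  then show ?thesis by (simp add: cond_one_def prob_cyl sum_bool measure_pmf_single)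
qed

lemma monotone_cross:
  assumes "monotone_system \<mu>" "feasible \<mu> v \<sigma>" "feasible \<mu> v \<tau>" "\<forall>u. u \<noteq> v \<longrightarrow> \<sigma> u \<le> \<tau> u"
  shows "pmf \<mu> (\<sigma>(v := True)) * pmf \<mu> (\<tau>(v := False)) \<le> pmf \<mu> (\<tau>(v := True)) * pmf \<mu> (\<sigma>(v := False))"
proof -
  define a0 where "a0 = pmf \<mu> (\<sigma>(v := False))"
  define a1 where "a1 = pmf \<mu> (\<sigma>(v := True))"
  define b0 where "b0 = pmf \<mu> (\<tau>(v := False))"
  define b1 where "b1 = pmf \<mu> (\<tau>(v := True))"
  have pa: "a0 + a1 > 0" using assms(2) by (simp add: feasible_bool a0_def a1_def)
  have pb: "b0 + b1 > 0" using assms(3) by (simp add: feasible_bool b0_def b1_def)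
  have "cond_one \<mu> v \<sigma> \<le> cond_one \<mu> v \<tau>" using assms unfolding monotone_system_def by blast
  then have "a1 / (a0 + a1) \<le> b1 / (b0 + b1)"
    using assms by (simp add: cond_one_eq a0_def a1_def b0_def b1_def)
  then have "a1 * (b0 + b1) \<le> b1 * (a0 + a1)" using pa pb by (simp add: frac_le_iff)
  then show ?thesis by (simp add: a0_def a1_def b0_def b1_def algebra_simps)
qed

lemma tilt_cond_mono:
  assumes "monotone_system \<mu>" "0 < \<theta>" "feasible \<mu> v \<sigma>" "feasible \<mu> v \<tau>"
    "\<forall>u. u \<noteq> v \<longrightarrow> \<sigma> u \<le> \<tau> u"
  shows "pmf (cond_site (tilt \<theta> \<mu>) v \<sigma>) True \<le> pmf (cond_site (tilt \<theta> \<mu>) v \<tau>) True"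
proof -
  define a0 where "a0 = pmf \<mu> (\<sigma>(v := False))"
  define a1 where "a1 = pmf \<mu> (\<sigma>(v := True))"
  define b0 where "b0 = pmf \<mu> (\<tau>(v := False))"
  define b1 where "b1 = pmf \<mu> (\<tau>(v := True))"
  have pa: "a0 + a1 > 0" using assms(3) by (simp add: feasible_bool a0_def a1_def)
  have pb: "b0 + b1 > 0" using assms(4) by (simp add: feasible_bool b0_def b1_def)
  have nn: "a0 \<ge> 0" "a1 \<ge> 0" "b0 \<ge> 0" "b1 \<ge> 0" by (simp_all add: a0_def a1_def b0_def b1_def)
  have pa': "a0 + \<theta> * a1 > 0"
  proof (cases "a0 > 0")
    case False then have "a1 > 0" using pa nn by auto
    then show ?thesis using nn assms(2) by (simp add: add_nonneg_pos)
  qed (use nn assms(2) in \<open>simp add: add_pos_nonneg\<close>)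
  have pb': "b0 + \<theta> * b1 > 0"
  proof (cases "b0 > 0")
    case False then have "b1 > 0" using pb nn by auto
    then show ?thesis using nn assms(2) by (simp add: add_nonneg_pos)
  qed (use nn assms(2) in \<open>simp add: add_pos_nonneg\<close>)
  have cr: "a1 * b0 \<le> b1 * a0"
    using monotone_cross[OF assms(1,3,4,5)] by (simp add: a0_def a1_def b0_def b1_def)
  have "\<theta> * a1 * (b0 + \<theta> * b1) \<le> \<theta> * b1 * (a0 + \<theta> * a1)"
  proof -
    have "\<theta> * (a1 * b0) \<le> \<theta> * (b1 * a0)" using cr assms(2) by (simp add: mult_left_mono)
    then show ?thesis by (simp add: algebra_simps)
  qed
  then have "\<theta> * a1 / (a0 + \<theta> * a1) \<le> \<theta> * b1 / (b0 + \<theta> * b1)"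
    using pa' pb' by (simp add: frac_le_iff)
  then show ?thesis using assms
    by (simp add: pmf_cond_tilt a0_def a1_def b0_def b1_def)
qed

definition mk :: "bool \<Rightarrow> bool \<Rightarrow> spin" where
  "mk c b = (if c then (if b then One else Star) else Zero)"

lemma lift_as_map:
  "lift \<theta> z = map_pmf (\<lambda>m u. mk (z u) (m u)) (Pi_pmf UNIV False (\<lambda>_. bernoulli_pmf \<theta>))"
proof -
  have "lift \<theta> z = Pi_pmf UNIV Zero (\<lambda>u. bind_pmf (bernoulli_pmf \<theta>) (\<lambda>b. return_pmf (mk (z u) b)))"
    unfolding lift_def
  proof (rule arg_cong[where f="Pi_pmf UNIV Zero"], rule ext)
    fix u
    show "(if z u then map_pmf (\<lambda>b. if b then One else Star) (bernoulli_pmf \<theta>) else return_pmf Zero)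
        = bind_pmf (bernoulli_pmf \<theta>) (\<lambda>b. return_pmf (mk (z u) b))"
      by (cases "z u") (simp_all add: mk_def map_pmf_def)
  qed
  also have "\<dots> = bind_pmf (Pi_pmf UNIV False (\<lambda>_. bernoulli_pmf \<theta>))
                    (\<lambda>f. Pi_pmf UNIV Zero (\<lambda>u. return_pmf (mk (z u) (f u))))"
    by (rule Pi_pmf_bind) simp
  also have "\<dots> = map_pmf (\<lambda>m u. mk (z u) (m u)) (Pi_pmf UNIV False (\<lambda>_. bernoulli_pmf \<theta>))"
    by (simp add: map_pmf_def)
  finally show ?thesis .
qed

lemma lift_mono:
  assumes "z \<le> z'"
  shows "rel_pmf (\<le>) (lift \<theta> z) (lift \<theta> z')"
  unfolding lift_as_map pmf.rel_map
proof (rule rel_pmf_reflI)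
  fix m :: "'a \<Rightarrow> bool"
  show "(\<lambda>u. mk (z u) (m u)) \<le> (\<lambda>u. mk (z' u) (m u))"
    using assms by (auto simp: le_fun_def mk_def)
qed

lemma contr_mono: "(X :: 'v \<Rightarrow> spin) \<le> X' \<Longrightarrow> contr X \<le> contr X'"
proof -
  assume a: "X \<le> X'"
  have "X u \<noteq> Zero \<Longrightarrow> X' u \<noteq> Zero" for u
  proof
    assume "X u \<noteq> Zero" "X' u = Zero"
    moreover have "X u \<le> X' u" using a by (simp add: le_fun_def)
    ultimately show False by (cases "X u") (auto simp: less_eq_spin_def)
  qed
  then show ?thesis by (auto simp: le_fun_def contr_def)
qed

lemma refresh_mono:
  assumes "X \<le> X'"
  shows "rel_pmf (\<le>) (alg_refresh \<theta> X) (alg_refresh \<theta> X')"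
  unfolding alg_refresh_def by (rule lift_mono[OF contr_mono[OF assms]])

lemma feasible_of_pos:
  assumes "pmf p x > 0"
  shows "feasible p v x"
proof -
  have "measure_pmf.prob p {x} \<le> measure_pmf.prob p (cyl v x)"
    by (rule measure_pmf.finite_measure_mono) (auto simp: cyl_def)
  then show ?thesis using assms by (simp add: feasible_def measure_pmf_single)
qed

definition b01 :: "bool \<Rightarrow> spin" where "b01 b = (if b then One else Zero)"

lemma alg_step_alt:
  "alg_step \<theta> \<mu> X = bind_pmf (pmf_of_set UNIV) (\<lambda>v. map_pmf (\<lambda>a. X(v := a))
     (if X v = Star then return_pmf Star else map_pmf b01 (cond_site (tilt \<theta> \<mu>) v (contr X))))"
  unfolding alg_step_def
proof (rule arg_cong[where f="bind_pmf (pmf_of_set UNIV)"], rule ext)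
  fix v
  show "(if X v = Star then return_pmf X
        else map_pmf (\<lambda>b. X(v := if b then One else Zero)) (cond_site (tilt \<theta> \<mu>) v (contr X))) =
        map_pmf (\<lambda>a. X(v := a))
          (if X v = Star then return_pmf Star else map_pmf b01 (cond_site (tilt \<theta> \<mu>) v (contr X)))"
    by (cases "X v = Star") (auto simp: pmf.map_comp o_def b01_def fun_upd_idem)
qed

lemma alg_step_mono:
  assumes mono: "monotone_system \<mu>" and th: "0 < \<theta>" and le: "X \<le> X'"
    and p1: "pmf \<mu> (contr X) > 0" and p2: "pmf \<mu> (contr X') > 0"
  shows "rel_pmf (\<le>) (alg_step \<theta> \<mu> X) (alg_step \<theta> \<mu> X')"
proof -
  have main: "rel_pmf (\<le>) (map_pmf (\<lambda>a. X(v := a))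
          (if X v = Star then return_pmf Star else map_pmf b01 (cond_site (tilt \<theta> \<mu>) v (contr X))))
        (map_pmf (\<lambda>a. X'(v := a))
          (if X' v = Star then return_pmf Star else map_pmf b01 (cond_site (tilt \<theta> \<mu>) v (contr X'))))" for v
  proof -
  have lev: "X v \<le> X' v" using le by (simp add: le_fun_def)
  have upd: "a \<le> b \<Longrightarrow> X(v := a) \<le> X'(v := b)" for a b using le by (auto simp: le_fun_def)
  show "rel_pmf (\<le>) (map_pmf (\<lambda>a. X(v := a))
          (if X v = Star then return_pmf Star else map_pmf b01 (cond_site (tilt \<theta> \<mu>) v (contr X))))
        (map_pmf (\<lambda>a. X'(v := a))
          (if X' v = Star then return_pmf Star else map_pmf b01 (cond_site (tilt \<theta> \<mu>) v (contr X'))))"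
  proof (cases "X' v = Star")
    case True
    show ?thesis unfolding pmf.rel_map using True
      by (auto intro!: rel_pmf_reflI simp: rel_pmf_return_pmf2 upd intro: upd)
  next
    case False
    then have F2: "X v \<noteq> Star" using lev by auto
    have f1: "feasible \<mu> v (contr X)" by (rule feasible_of_pos[OF p1])
    have f2: "feasible \<mu> v (contr X')" by (rule feasible_of_pos[OF p2])
    have cm: "\<forall>u. u \<noteq> v \<longrightarrow> contr X u \<le> contr X' u" using contr_mono[OF le] by (simp add: le_fun_def)
    have "rel_pmf (\<le>) (cond_site (tilt \<theta> \<mu>) v (contr X)) (cond_site (tilt \<theta> \<mu>) v (contr X'))"
      by (rule bool_sd, rule tilt_cond_mono[OF mono th f1 f2 cm])
    then have "rel_pmf (\<lambda>x y. X(v := b01 x) \<le> X'(v := b01 y))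
        (cond_site (tilt \<theta> \<mu>) v (contr X)) (cond_site (tilt \<theta> \<mu>) v (contr X'))"
      by (rule pmf.rel_mono_strong) (auto intro!: upd simp: b01_def less_eq_spin_def le_bool_def)
    then show ?thesis using False F2 by (simp add: pmf.rel_map)
  qed
  qed
  show ?thesis unfolding alg_step_alt
    by (rule rel_pmf_bindI[OF rel_pmf_reflI[of _ "(=)"]], rule refl, hypsubst, rule main)
qed

lemma Rst_nz_agree:
  assumes "0 < \<theta>" "\<theta> < 1" "Rst \<theta> z X v \<noteq> 0"
  shows "\<forall>u. u \<noteq> v \<longrightarrow> z u = contr X u"
proof (intro allI impI)
  fix u assume "u \<noteq> v"
  then have "lp \<theta> (z u) (X u) \<noteq> 0" using assms(3) unfolding Rst_def
    by (auto simp: prod_zero_iff)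
  then show "z u = contr X u" using assms(1,2) by (simp add: lp_zero_iff contr_def)
qed

lemma feasible_cong:
  "\<forall>u. u \<noteq> v \<longrightarrow> x u = y u \<Longrightarrow> feasible p v x = feasible p v y"
  using cyl_cong[of v x y] by (simp add: feasible_def)

lemma gd_lift_step_v:
  fixes \<mu> :: "('v::finite \<Rightarrow> bool) pmf"
  assumes th: "0 < \<theta>" "\<theta> < 1" and pz: "pmf \<mu> z > 0"
  shows "bind_pmf (lift \<theta> z) (\<lambda>X. map_pmf (\<lambda>a. X(v := a)) (cond_site (lifted \<theta> \<mu>) v X))
       = bind_pmf (map_pmf (\<lambda>b. z(v := b)) (cond_site \<mu> v z)) (lift \<theta>)"
proof (rule pmf_eqI)
  fix X' :: "'v \<Rightarrow> spin"
  define s where "s = contr X'"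
  define R where "R = Rst \<theta> z X' v"
  define R' where "R' = Rst \<theta> s X' v"
  define m0 where "m0 = pmf \<mu> (z(v := False))"
  define m1 where "m1 = pmf \<mu> (z(v := True))"
  have ls: "\<And>z X. pmf (lift \<theta> z) X = lp \<theta> (z v) (X v) * Rst \<theta> z X v"
    using pmf_lift_split th by (metis less_imp_le)
  have fz: "feasible \<mu> v z" by (rule feasible_of_pos[OF pz])
  have zsum: "m0 + m1 > 0" using fz by (simp add: feasible_bool m0_def m1_def)
  have rhs: "pmf (bind_pmf (map_pmf (\<lambda>b. z(v := b)) (cond_site \<mu> v z)) (lift \<theta>)) X'
      = (\<Sum>b\<in>UNIV. (if b then m1 else m0) / (m0 + m1) * (lp \<theta> b (X' v) * R))"
    by (simp add: bind_map_pmf pmf_bind_fin pmf_cond_site[OF fz] sum_bool ls R_def m0_def m1_def)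
  have lhs: "pmf (bind_pmf (lift \<theta> z) (\<lambda>X. map_pmf (\<lambda>a. X(v := a)) (cond_site (lifted \<theta> \<mu>) v X))) X'
      = (\<Sum>a\<in>UNIV. lp \<theta> (z v) a * R * pmf (cond_site (lifted \<theta> \<mu>) v (X'(v := a))) (X' v))"
    by (simp add: pmf_bind_upd ls R_def)
  show "pmf (bind_pmf (lift \<theta> z) (\<lambda>X. map_pmf (\<lambda>a. X(v := a)) (cond_site (lifted \<theta> \<mu>) v X))) X'
      = pmf (bind_pmf (map_pmf (\<lambda>b. z(v := b)) (cond_site \<mu> v z)) (lift \<theta>)) X'"
  proof (cases "R = 0")
    case True
    then show ?thesis using lhs rhs by simp
  next
    case False
    have agree: "\<forall>u. u \<noteq> v \<longrightarrow> z u = s u"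
      using Rst_nz_agree[OF th] False by (simp add: R_def s_def)
    have zs: "z(v := b) = s(v := b)" for b using agree by (auto simp: fun_eq_iff)
    have R'pos: "R' > 0" unfolding R'_def s_def by (rule Rst_pos[OF th])
    have pi_upd: "pmf (lifted \<theta> \<mu>) (X'(v := a)) = pmf \<mu> (s(v := (a \<noteq> Zero))) * lp \<theta> (a \<noteq> Zero) a * R'" for a
      unfolding lifted_def using pmf_bind_lift_upd[OF th] by (simp add: s_def R'_def)
    have sum_pi: "(\<Sum>a\<in>UNIV. pmf (lifted \<theta> \<mu>) (X'(v := a))) = (m0 + m1) * R'"
      by (simp add: sum_spin pi_upd lp_def algebra_simps m0_def m1_def zs)
    have feas: "feasible (lifted \<theta> \<mu>) v X'"
      using zsum R'pos by (simp add: feasible_iff sum_pi)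
    have C: "pmf (cond_site (lifted \<theta> \<mu>) v (X'(v := a))) (X' v) = pmf (lifted \<theta> \<mu>) X' / ((m0 + m1) * R')" for a
    proof -
      have "cond_site (lifted \<theta> \<mu>) v (X'(v := a)) = cond_site (lifted \<theta> \<mu>) v X'"
        by (rule cond_site_cong[symmetric]) (use feas in auto)
      then show ?thesis using feas by (simp add: pmf_cond_site sum_pi)
    qed
    have piX: "pmf (lifted \<theta> \<mu>) X' = pmf \<mu> (s(v := (X' v \<noteq> Zero))) * lp \<theta> (X' v \<noteq> Zero) (X' v) * R'"
      using pi_upd[of "X' v"] by simp
    have "pmf (bind_pmf (lift \<theta> z) (\<lambda>X. map_pmf (\<lambda>a. X(v := a)) (cond_site (lifted \<theta> \<mu>) v X))) X'
        = (\<Sum>a\<in>UNIV. lp \<theta> (z v) a * (R * (pmf (lifted \<theta> \<mu>) X' / ((m0 + m1) * R'))))"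
      by (simp only: lhs C mult.assoc)
    also have "\<dots> = (\<Sum>a\<in>UNIV. lp \<theta> (z v) a) * (R * (pmf (lifted \<theta> \<mu>) X' / ((m0 + m1) * R')))"
      by (simp only: sum_distrib_right)
    also have "\<dots> = R * (pmf (lifted \<theta> \<mu>) X' / ((m0 + m1) * R'))" by (simp add: lp_sum)
    also have "\<dots> = R * (pmf \<mu> (s(v := (X' v \<noteq> Zero))) * lp \<theta> (X' v \<noteq> Zero) (X' v) / (m0 + m1))"
    proof -
      have "R' \<noteq> 0" using R'pos by simp
      then show ?thesis unfolding piX by (simp add: mult.assoc)
    qed
    also have "\<dots> = pmf (bind_pmf (map_pmf (\<lambda>b. z(v := b)) (cond_site \<mu> v z)) (lift \<theta>)) X'"
      unfolding rhs
      by (cases "X' v") (simp_all add: sum_bool lp_def m0_def m1_def zs)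
    finally show ?thesis .
  qed
qed

lemma gd_lift_step:
  fixes \<mu> :: "('v::finite \<Rightarrow> bool) pmf"
  assumes th: "0 < \<theta>" "\<theta> < 1" and pz: "pmf \<mu> z > 0"
  shows "bind_pmf (lift \<theta> z) (gd_step (lifted \<theta> \<mu>)) = bind_pmf (gd_step \<mu> z) (lift \<theta>)"
  unfolding gd_step_def
  by (subst bind_commute_pmf, subst bind_assoc_pmf, rule arg_cong[where f="bind_pmf (pmf_of_set UNIV)"],
      rule ext, rule gd_lift_step_v[OF th pz])

lemma cond_site_supp:
  fixes p :: "('v::finite \<Rightarrow> 'a::finite) pmf"
  assumes "feasible p v x" "a \<in> set_pmf (cond_site p v x)"
  shows "pmf p (x(v := a)) > 0"
proof -
  have S: "(\<Sum>b\<in>UNIV. pmf p (x(v := b))) > 0" using assms(1) by (simp add: feasible_iff)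
  have "pmf (cond_site p v x) a \<noteq> 0" using assms(2) by (simp add: set_pmf_iff)
  then have "pmf p (x(v := a)) \<noteq> 0" using assms(1) by (simp add: pmf_cond_site)
  then show ?thesis using pmf_nonneg[of p] by (simp add: less_le)
qed

lemma gd_step_supp:
  fixes \<mu> :: "('v::finite \<Rightarrow> bool) pmf"
  assumes "pmf \<mu> z > 0" "y \<in> set_pmf (gd_step \<mu> z)"
  shows "pmf \<mu> y > 0"
proof -
  obtain v b where "y = z(v := b)" "b \<in> set_pmf (cond_site \<mu> v z)"
    using assms(2) by (auto simp: gd_step_def)
  then show ?thesis using cond_site_supp[OF feasible_of_pos[OF assms(1)]] by blast
qed

lemma gd_law_supp:
  fixes \<mu> :: "('v::finite \<Rightarrow> bool) pmf"
  assumes "pmf \<mu> (\<lambda>_. True) > 0"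
  shows "z \<in> set_pmf (gd_law \<mu> (return_pmf (\<lambda>_. True)) t) \<Longrightarrow> pmf \<mu> z > 0"
proof (induction t arbitrary: z)
  case 0 then show ?case using assms by simp
next
  case (Suc t) then show ?case using gd_step_supp by auto
qed

lemma gd_repr:
  fixes \<mu> :: "('v::finite \<Rightarrow> bool) pmf"
  assumes th: "0 < \<theta>" "\<theta> < 1" and p1: "pmf \<mu> (\<lambda>_. True) > 0"
  shows "gd_law (lifted \<theta> \<mu>) (lift \<theta> (\<lambda>_. True)) t = bind_pmf (gd_law \<mu> (return_pmf (\<lambda>_. True)) t) (lift \<theta>)"
proof (induction t)
  case 0 then show ?case by (simp add: bind_return_pmf)
next
  case (Suc t)
  have "gd_law (lifted \<theta> \<mu>) (lift \<theta> (\<lambda>_. True)) (Suc t)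
      = bind_pmf (gd_law \<mu> (return_pmf (\<lambda>_. True)) t) (\<lambda>z. bind_pmf (lift \<theta> z) (gd_step (lifted \<theta> \<mu>)))"
    using Suc by (simp add: bind_assoc_pmf)
  also have "\<dots> = bind_pmf (gd_law \<mu> (return_pmf (\<lambda>_. True)) t) (\<lambda>z. bind_pmf (gd_step \<mu> z) (lift \<theta>))"
    by (rule bind_pmf_cong[OF refl], rule gd_lift_step[OF th], rule gd_law_supp[OF p1])
  also have "\<dots> = bind_pmf (gd_law \<mu> (return_pmf (\<lambda>_. True)) (Suc t)) (lift \<theta>)"
    by (simp add: bind_assoc_pmf)
  finally show ?case .
qed

definition inv_dens :: "('v \<Rightarrow> bool) pmf \<Rightarrow> ('v \<Rightarrow> bool) pmf \<Rightarrow> bool" where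
  "inv_dens \<mu> \<nu> \<longleftrightarrow> (\<forall>x. pmf \<nu> x > 0 \<longrightarrow> pmf \<mu> x > 0) \<and>
     (\<forall>x y. x \<le> y \<longrightarrow> pmf \<nu> x * pmf \<mu> y \<le> pmf \<nu> y * pmf \<mu> x)"

definition Sb :: "('v \<Rightarrow> bool) pmf \<Rightarrow> 'v \<Rightarrow> ('v \<Rightarrow> bool) \<Rightarrow> real" where
  "Sb p v y = pmf p (y(v := False)) + pmf p (y(v := True))"

lemma pmf_gd_step_bind:
  fixes \<mu> \<nu> :: "('v::finite \<Rightarrow> bool) pmf"
  assumes supp: "\<And>x. pmf \<nu> x > 0 \<Longrightarrow> pmf \<mu> x > 0"
  shows "pmf (bind_pmf \<nu> (gd_step \<mu>)) y = (\<Sum>v\<in>UNIV. pmf \<mu> y * (Sb \<nu> v y / Sb \<mu> v y)) / real (card (UNIV :: 'v set))"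
proof -
  have T: "pmf \<nu> (y(v := b)) * pmf (cond_site \<mu> v (y(v := b))) (y v) = pmf \<nu> (y(v := b)) * (pmf \<mu> y / Sb \<mu> v y)" for v b
  proof (cases "pmf \<nu> (y(v := b)) = 0")
    case False
    then have "pmf \<nu> (y(v := b)) > 0" using pmf_nonneg[of \<nu>] by (simp add: less_le)
    then have f: "feasible \<mu> v (y(v := b))" by (intro feasible_of_pos supp)
    then show ?thesis by (simp add: pmf_cond_site sum_bool Sb_def)
  qed simp
  have "pmf (bind_pmf \<nu> (gd_step \<mu>)) y
      = pmf (bind_pmf (pmf_of_set UNIV) (\<lambda>v. bind_pmf \<nu> (\<lambda>w. map_pmf (\<lambda>a. w(v := a)) (cond_site \<mu> v w)))) y"
    unfolding gd_step_def by (subst bind_commute_pmf) (rule refl)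
  also have "\<dots> = (\<Sum>v\<in>UNIV. pmf (bind_pmf \<nu> (\<lambda>w. map_pmf (\<lambda>a. w(v := a)) (cond_site \<mu> v w))) y) / real (card (UNIV :: 'v set))"
    by (rule pmf_bind_pmf_of_set) auto
  also have "\<dots> = (\<Sum>v\<in>UNIV. pmf \<mu> y * (Sb \<nu> v y / Sb \<mu> v y)) / real (card (UNIV :: 'v set))"
  proof -
    have "pmf (bind_pmf \<nu> (\<lambda>w. map_pmf (\<lambda>a. w(v := a)) (cond_site \<mu> v w))) y = pmf \<mu> y * (Sb \<nu> v y / Sb \<mu> v y)" for v
      by (simp add: pmf_bind_upd T sum_bool Sb_def algebra_simps add_divide_distrib)
    then show ?thesis by simp
  qed
  finally show ?thesis .
qed

lemma gv_mono:
  fixes \<mu> \<nu> :: "('v::finite \<Rightarrow> bool) pmf"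
  assumes mono: "monotone_system \<mu>" and inv: "inv_dens \<mu> \<nu>" and le: "x \<le> y"
    and px: "pmf \<mu> x > 0" and py: "pmf \<mu> y > 0"
  shows "Sb \<nu> v x / Sb \<mu> v x \<le> Sb \<nu> v y / Sb \<mu> v y"
proof -
  define a0 where "a0 = pmf \<mu> (x(v := False))"
  define a1 where "a1 = pmf \<mu> (x(v := True))"
  define b0 where "b0 = pmf \<mu> (y(v := False))"
  define b1 where "b1 = pmf \<mu> (y(v := True))"
  define n0 where "n0 = pmf \<nu> (x(v := False))"
  define n1 where "n1 = pmf \<nu> (x(v := True))"
  define p0 where "p0 = pmf \<nu> (y(v := False))"
  define p1 where "p1 = pmf \<nu> (y(v := True))"
  have nn: "a0 \<ge> 0" "a1 \<ge> 0" "b0 \<ge> 0" "b1 \<ge> 0" "n0 \<ge> 0" "n1 \<ge> 0" "p0 \<ge> 0" "p1 \<ge> 0"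
    by (simp_all add: a0_def a1_def b0_def b1_def n0_def n1_def p0_def p1_def)
  have cr: "\<And>u w. u \<le> w \<Longrightarrow> pmf \<nu> u * pmf \<mu> w \<le> pmf \<nu> w * pmf \<mu> u"
    using inv by (simp add: inv_dens_def)
  have sp: "\<And>u. pmf \<mu> u = 0 \<Longrightarrow> pmf \<nu> u = 0"
    using inv pmf_nonneg[of \<nu>] unfolding inv_dens_def by (metis less_le less_irrefl)
  have H1: "n0 * b0 \<le> p0 * a0" unfolding n0_def b0_def p0_def a0_def
    by (rule cr) (use le in \<open>auto simp: le_fun_def\<close>)
  have H2: "n1 * b1 \<le> p1 * a1" unfolding n1_def b1_def p1_def a1_def
    by (rule cr) (use le in \<open>auto simp: le_fun_def\<close>)
  have H5: "n0 * b1 \<le> p1 * a0" unfolding n0_def b1_def p1_def a0_def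
    by (rule cr) (use le in \<open>auto simp: le_fun_def\<close>)
  have H3: "n0 * a1 \<le> n1 * a0" unfolding n0_def a1_def n1_def a0_def
    by (rule cr) (auto simp: le_fun_def)
  have H4: "p0 * b1 \<le> p1 * b0" unfolding p0_def b1_def p1_def b0_def
    by (rule cr) (auto simp: le_fun_def)
  have fx: "feasible \<mu> v x" by (rule feasible_of_pos[OF px])
  have fy: "feasible \<mu> v y" by (rule feasible_of_pos[OF py])
  have M: "a1 * b0 \<le> b1 * a0"
    using monotone_cross[OF mono fx fy] le by (simp add: le_fun_def a0_def a1_def b0_def b1_def)
  have Sa: "a0 + a1 > 0" using fx by (simp add: feasible_bool a0_def a1_def)
  have Sbb: "b0 + b1 > 0" using fy by (simp add: feasible_bool b0_def b1_def)
  have goal: "(n0 + n1) * (b0 + b1) \<le> (p0 + p1) * (a0 + a1)"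
  proof (cases "a1 = 0")
    case True
    then have "n1 = 0" using sp by (simp add: a1_def n1_def)
    then show ?thesis using True H1 H5 nn by (simp add: algebra_simps)
  next
    case a1: False
    show ?thesis
    proof (cases "b0 = 0")
      case True
      then have "p0 = 0" using sp by (simp add: b0_def p0_def)
      then show ?thesis using True H2 H5 nn by (simp add: algebra_simps)
    next
      case b0: False
      have a1p: "a1 > 0" and b0p: "b0 > 0" using a1 b0 nn by auto
      then have "a1 * b0 > 0" by simp
      then have "b1 * a0 > 0" using M by linarith
      then have a0p: "a0 > 0" and b1p: "b1 > 0" using nn by (auto simp: zero_less_mult_iff)
      define f0 where "f0 = n0 / a0"
      define f1 where "f1 = n1 / a1"
      define g0 where "g0 = p0 / b0"
      define g1 where "g1 = p1 / b1"
      have e: "n0 = f0 * a0" "n1 = f1 * a1" "p0 = g0 * b0" "p1 = g1 * b1"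
        using a0p a1p b0p b1p by (simp_all add: f0_def f1_def g0_def g1_def)
      have i1: "f0 \<le> g0"
      proof -
        have "f0 * (a0 * b0) \<le> g0 * (a0 * b0)" using H1 by (simp add: e algebra_simps)
        then show ?thesis using a0p b0p by simp
      qed
      have i2: "f1 \<le> g1"
      proof -
        have "f1 * (a1 * b1) \<le> g1 * (a1 * b1)" using H2 by (simp add: e algebra_simps)
        then show ?thesis using a1p b1p by simp
      qed
      have i5: "f0 \<le> g1"
      proof -
        have "f0 * (a0 * b1) \<le> g1 * (a0 * b1)" using H5 by (simp add: e algebra_simps)
        then show ?thesis using a0p b1p by simp
      qed
      have k1: "0 \<le> (g1 - f0) * (a0 * b1 - a1 * b0)" using i5 M by (intro mult_nonneg_nonneg) (auto simp: algebra_simps)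
      have k2: "0 \<le> (g1 - f1 + g0 - f0) * (a1 * b0)" using i1 i2 a1p b0p by simp
      have "(p0 + p1) * (a0 + a1) - (n0 + n1) * (b0 + b1)
          = (p0 * a0 - n0 * b0) + (p1 * a1 - n1 * b1) + ((g1 - f0) * (a0 * b1 - a1 * b0) + (g1 - f1 + g0 - f0) * (a1 * b0))"
        by (simp add: e algebra_simps)
      then show ?thesis using k1 k2 H1 H2 by linarith
    qed
  qed
  have "Sb \<nu> v x / Sb \<mu> v x = (n0 + n1) / (a0 + a1)" by (simp add: Sb_def n0_def n1_def a0_def a1_def)
  also have "\<dots> \<le> (p0 + p1) / (b0 + b1)" using goal Sa Sbb by (simp add: frac_le_iff)
  also have "\<dots> = Sb \<nu> v y / Sb \<mu> v y" by (simp add: Sb_def p0_def p1_def b0_def b1_def)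
  finally show ?thesis .
qed

lemma sum_scale: "(\<Sum>v\<in>A. f v) / (n::real) * c = (\<Sum>v\<in>A. c * f v) / n"
  by (simp add: sum_distrib_left mult.commute)

lemma inv_step:
  fixes \<mu> \<nu> :: "('v::finite \<Rightarrow> bool) pmf"
  assumes mono: "monotone_system \<mu>" and inv: "inv_dens \<mu> \<nu>"
  shows "inv_dens \<mu> (bind_pmf \<nu> (gd_step \<mu>))"
proof -
  have supp: "\<And>x. pmf \<nu> x > 0 \<Longrightarrow> pmf \<mu> x > 0" using inv by (simp add: inv_dens_def)
  have supp': "pmf \<mu> y > 0" if "pmf (bind_pmf \<nu> (gd_step \<mu>)) y > 0" for y
  proof -
    have "y \<in> set_pmf (bind_pmf \<nu> (gd_step \<mu>))" using that by (metis less_irrefl set_pmf_iff)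
    then obtain w where w: "w \<in> set_pmf \<nu>" "y \<in> set_pmf (gd_step \<mu> w)" by auto
    have "pmf \<mu> w > 0" using w(1) supp by (simp add: pmf_positive)
    then show ?thesis using gd_step_supp w(2) by blast
  qed
  have zero: "pmf (bind_pmf \<nu> (gd_step \<mu>)) y = 0" if "pmf \<mu> y = 0" for y
    using supp'[of y] that pmf_nonneg[of "bind_pmf \<nu> (gd_step \<mu>)" y] by linarith
  define n where "n = real (card (UNIV :: 'v set))"
  have npos: "n > 0" by (simp add: n_def)
  have F: "pmf (bind_pmf \<nu> (gd_step \<mu>)) y = (\<Sum>v\<in>UNIV. pmf \<mu> y * (Sb \<nu> v y / Sb \<mu> v y)) / n" for y
    unfolding n_def by (rule pmf_gd_step_bind[OF supp])
  have cross: "pmf (bind_pmf \<nu> (gd_step \<mu>)) x * pmf \<mu> y \<le> pmf (bind_pmf \<nu> (gd_step \<mu>)) y * pmf \<mu> x"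
    if le: "x \<le> y" for x y
  proof (cases "pmf \<mu> x = 0 \<or> pmf \<mu> y = 0")
    case True
    then show ?thesis using zero[of x] by (auto intro: mult_nonneg_nonneg)
  next
    case False
    then have px: "pmf \<mu> x > 0" and py: "pmf \<mu> y > 0" using pmf_nonneg[of \<mu>] by (auto simp: less_le)
    have "pmf (bind_pmf \<nu> (gd_step \<mu>)) x * pmf \<mu> y
        = (\<Sum>v\<in>UNIV. pmf \<mu> x * pmf \<mu> y * (Sb \<nu> v x / Sb \<mu> v x)) / n"
      unfolding F sum_scale by (simp add: mult_ac)
    also have "\<dots> \<le> (\<Sum>v\<in>UNIV. pmf \<mu> x * pmf \<mu> y * (Sb \<nu> v y / Sb \<mu> v y)) / n"
      using npos px py gv_mono[OF mono inv le px py]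
      by (intro divide_right_mono sum_mono mult_left_mono) auto
    also have "\<dots> = pmf (bind_pmf \<nu> (gd_step \<mu>)) y * pmf \<mu> x"
      unfolding F sum_scale by (simp add: mult_ac)
    finally show ?thesis .
  qed
  show ?thesis unfolding inv_dens_def using supp' cross by blast
qed

lemma inv_gd_law:
  fixes \<mu> :: "('v::finite \<Rightarrow> bool) pmf"
  assumes mono: "monotone_system \<mu>" and p1: "pmf \<mu> (\<lambda>_. True) > 0"
  shows "inv_dens \<mu> (gd_law \<mu> (return_pmf (\<lambda>_. True)) t)"
proof (induction t)
  case 0
  have "pmf (return_pmf (\<lambda>_. True)) x * pmf \<mu> y \<le> pmf (return_pmf (\<lambda>_. True)) y * pmf \<mu> x"
    if "x \<le> y" for x y :: "'v \<Rightarrow> bool"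
  proof (cases "x = (\<lambda>_. True)")
    case True
    then have "y = (\<lambda>_. True)" using that by (auto simp: le_fun_def fun_eq_iff)
    then show ?thesis using True by simp
  next
    case False
    then show ?thesis by (simp add: indicator_def)
  qed
  then show ?case using p1 by (auto simp: inv_dens_def indicator_def split: if_splits)
next
  case (Suc t)
  then show ?case using inv_step[OF mono] by simp
qed

lemma disint:
  fixes G :: "('v \<Rightarrow> 'a) pmf"
  shows "bind_pmf G K = bind_pmf (map_pmf (\<lambda>X. X(v := c)) G) (\<lambda>Y. bind_pmf (cond_pmf G (cyl v Y)) K)"
proof -
  define R where "R = (\<lambda>(Y::'v \<Rightarrow> 'a) X. \<forall>u. u \<noteq> v \<longrightarrow> X u = Y u)"
  have cylR: "cyl v Y = {X. R Y X}" for Y by (simp add: cyl_def R_def)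
  have "bind_pmf (map_pmf (\<lambda>X. X(v := c)) G) (\<lambda>Y. cond_pmf G {X. R Y X}) = G"
  proof (rule bind_cond_pmf_cancel)
    fix Y assume "Y \<in> set_pmf (map_pmf (\<lambda>X. X(v := c)) G)"
    then obtain X0 where "X0 \<in> set_pmf G" "Y = X0(v := c)" by auto
    then show "set_pmf G \<inter> {X. R Y X} \<noteq> {}" by (auto simp: R_def)
  next
    fix X assume "X \<in> set_pmf G"
    then show "set_pmf (map_pmf (\<lambda>X. X(v := c)) G) \<inter> {Y. R Y X} \<noteq> {}" by (auto simp: R_def)
  next
    fix Y X assume "R Y X"
    have "(\<lambda>X. X(v := c)) -` {Y'. R Y' X} = {X'. R Y X'}"
      using \<open>R Y X\<close> by (auto simp: R_def)
    then show "measure_pmf.prob G {X'. R Y X'} = measure_pmf.prob (map_pmf (\<lambda>X. X(v := c)) G) {Y'. R Y' X}"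
      by simp
  qed
  then have "bind_pmf G K = bind_pmf (bind_pmf (map_pmf (\<lambda>X. X(v := c)) G) (\<lambda>Y. cond_pmf G (cyl v Y))) K"
    by (simp add: cylR)
  also have "\<dots> = bind_pmf (map_pmf (\<lambda>X. X(v := c)) G) (\<lambda>Y. bind_pmf (cond_pmf G (cyl v Y)) K)"
    by (rule bind_assoc_pmf)
  finally show ?thesis .
qed

lemma G_supp:
  assumes "0 < \<theta>" "\<theta> < 1" "X \<in> set_pmf (bind_pmf Z (lift \<theta>))"
  shows "pmf Z (contr X) > 0"
proof -
  obtain z where z: "z \<in> set_pmf Z" "X \<in> set_pmf (lift \<theta> z)" using assms(3) by auto
  then have "contr X = z" using set_pmf_lift[OF assms(1,2)] by blast
  then show ?thesis using pmf_positive[OF z(1)] by simp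
qed

lemma b01_inj: "inj b01" by (auto simp: inj_def b01_def split: if_splits)

lemma pmf_map_b01:
  "pmf (map_pmf b01 T) Zero = pmf T False" "pmf (map_pmf b01 T) One = pmf T True"
  "pmf (map_pmf b01 T) Star = 0"
proof -
  show "pmf (map_pmf b01 T) Zero = pmf T False"
    using pmf_map_inj'[OF b01_inj, of T False] by (simp add: b01_def)
  show "pmf (map_pmf b01 T) One = pmf T True"
    using pmf_map_inj'[OF b01_inj, of T True] by (simp add: b01_def)
  show "pmf (map_pmf b01 T) Star = 0"
    by (rule pmf_map_outside) (auto simp: b01_def)
qed

lemma key_v:
  fixes \<mu> Z :: "('v::finite \<Rightarrow> bool) pmf"
  assumes th: "0 < \<theta>" "\<theta> < 1" and inv: "inv_dens \<mu> Z"
  shows "rel_pmf (\<le>)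
    (bind_pmf (bind_pmf Z (lift \<theta>)) (\<lambda>X. map_pmf (\<lambda>a. X(v := a)) (cond_site (lifted \<theta> \<mu>) v X)))
    (bind_pmf (bind_pmf Z (lift \<theta>)) (\<lambda>X. map_pmf (\<lambda>a. X(v := a))
        (if X v = Star then return_pmf Star else map_pmf b01 (cond_site (tilt \<theta> \<mu>) v (contr X)))))"
proof -
  define G where "G = bind_pmf Z (lift \<theta>)"
  define \<pi> where "\<pi> = lifted \<theta> \<mu>"
  define W where "W = map_pmf (\<lambda>X. X(v := Zero)) G"
  define D2 where "D2 = (\<lambda>X::'v \<Rightarrow> spin. if X v = Star then return_pmf Star
      else map_pmf b01 (cond_site (tilt \<theta> \<mu>) v (contr X)))"
  have suppZ: "\<And>x. pmf Z x > 0 \<Longrightarrow> pmf \<mu> x > 0" using inv by (simp add: inv_dens_def)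
  have crossZ: "\<And>x y. x \<le> y \<Longrightarrow> pmf Z x * pmf \<mu> y \<le> pmf Z y * pmf \<mu> x"
    using inv by (simp add: inv_dens_def)
  have Gsupp: "\<And>X. X \<in> set_pmf G \<Longrightarrow> pmf \<mu> (contr X) > 0"
    using G_supp[OF th] suppZ unfolding G_def by blast
  have main: "rel_pmf (\<le>) (bind_pmf (cond_pmf G (cyl v Y)) (\<lambda>X. map_pmf (\<lambda>a. X(v := a)) (cond_site \<pi> v X)))
        (bind_pmf (cond_pmf G (cyl v Y)) (\<lambda>X. map_pmf (\<lambda>a. X(v := a)) (D2 X)))"
    if Y: "Y \<in> set_pmf W" for Y
  proof -
    obtain X0 where X0: "X0 \<in> set_pmf G" "Y = X0(v := Zero)" using Y by (auto simp: W_def)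
    have X0cyl: "X0 \<in> cyl v Y" using X0 by (auto simp: cyl_def)
    have ne: "set_pmf G \<inter> cyl v Y \<noteq> {}" using X0 X0cyl by blast
    define C where "C = cond_pmf G (cyl v Y)"
    have setC: "set_pmf C = set_pmf G \<inter> cyl v Y" unfolding C_def by (rule set_cond_pmf[OF ne])
    have updC: "(\<lambda>a. X(v := a)) = (\<lambda>a. Y(v := a))" if "X \<in> set_pmf C" for X
      using that setC by (auto simp: cyl_def fun_eq_iff)
    have agreeC: "\<forall>u. u \<noteq> v \<longrightarrow> Y u = X u" if "X \<in> set_pmf C" for X
      using that setC by (auto simp: cyl_def)
    define s where "s = contr Y"
    define R where "R = Rst \<theta> s Y v"
    have Rpos: "R > 0" unfolding R_def s_def by (rule Rst_pos[OF th])
    define m0 where "m0 = pmf \<mu> (s(v := False))"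
    define m1 where "m1 = pmf \<mu> (s(v := True))"
    define z0 where "z0 = pmf Z (s(v := False))"
    define z1 where "z1 = pmf Z (s(v := True))"
    have nn: "m0 \<ge> 0" "m1 \<ge> 0" "z0 \<ge> 0" "z1 \<ge> 0" by (simp_all add: m0_def m1_def z0_def z1_def)
    have piY: "pmf \<pi> (Y(v := a)) = pmf \<mu> (s(v := (a \<noteq> Zero))) * lp \<theta> (a \<noteq> Zero) a * R" for a
      unfolding \<pi>_def lifted_def using pmf_bind_lift_upd[OF th] by (simp add: s_def R_def)
    have GY: "pmf G (Y(v := a)) = pmf Z (s(v := (a \<noteq> Zero))) * lp \<theta> (a \<noteq> Zero) a * R" for a
      unfolding G_def using pmf_bind_lift_upd[OF th] by (simp add: s_def R_def)
    have sumpi: "(\<Sum>a\<in>UNIV. pmf \<pi> (Y(v := a))) = (m0 + m1) * R"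
      by (simp add: sum_spin piY lp_def m0_def m1_def algebra_simps)
    have sumG: "(\<Sum>a\<in>UNIV. pmf G (Y(v := a))) = (z0 + z1) * R"
      by (simp add: sum_spin GY lp_def z0_def z1_def algebra_simps)
    have "X0 = Y(v := X0 v)" using X0 by (auto simp: fun_eq_iff)
    then have "pmf G X0 \<le> (\<Sum>a\<in>UNIV. pmf G (Y(v := a)))"
      by (metis (no_types, lifting) finite UNIV_I member_le_sum pmf_nonneg)
    moreover have "pmf G X0 > 0" using X0(1) by (simp add: pmf_positive)
    ultimately have "(z0 + z1) * R > 0" using sumG by linarith
    then have zpos: "z0 + z1 > 0" using Rpos by (simp add: zero_less_mult_iff)
    have fG: "feasible G v Y" using zpos Rpos by (simp add: feasible_iff sumG)
    have mpos: "m0 + m1 > 0"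
    proof (cases "z0 > 0")
      case True then have "m0 > 0" using suppZ by (simp add: z0_def m0_def)
      then show ?thesis using nn by simp
    next
      case False then have "z1 > 0" using zpos nn by simp
      then have "m1 > 0" using suppZ by (simp add: z1_def m1_def)
      then show ?thesis using nn by simp
    qed
    have fpi: "feasible \<pi> v Y" using mpos Rpos by (simp add: feasible_iff sumpi)
    have fmu: "feasible \<mu> v s" using mpos by (simp add: feasible_bool m0_def m1_def)
    have E1: "bind_pmf C (\<lambda>X. map_pmf (\<lambda>a. X(v := a)) (cond_site \<pi> v X))
        = map_pmf (\<lambda>a. Y(v := a)) (cond_site \<pi> v Y)"
    proof -
      have "bind_pmf C (\<lambda>X. map_pmf (\<lambda>a. X(v := a)) (cond_site \<pi> v X))
          = bind_pmf C (\<lambda>X. map_pmf (\<lambda>a. Y(v := a)) (cond_site \<pi> v Y))"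
      proof (rule bind_pmf_cong[OF refl])
        fix X assume X: "X \<in> set_pmf C"
        have "cond_site \<pi> v Y = cond_site \<pi> v X" by (rule cond_site_cong[OF agreeC[OF X] fpi])
        then show "map_pmf (\<lambda>a. X(v := a)) (cond_site \<pi> v X) = map_pmf (\<lambda>a. Y(v := a)) (cond_site \<pi> v Y)"
          by (simp add: updC[OF X])
      qed
      then show ?thesis by simp
    qed
    define T where "T = cond_site (tilt \<theta> \<mu>) v s"
    define H where "H = (\<lambda>a. if a = Star then return_pmf Star else map_pmf b01 T)"
    have E2: "bind_pmf C (\<lambda>X. map_pmf (\<lambda>a. X(v := a)) (D2 X))
        = map_pmf (\<lambda>a. Y(v := a)) (bind_pmf (cond_site G v Y) H)"
    proof -
      have "bind_pmf C (\<lambda>X. map_pmf (\<lambda>a. X(v := a)) (D2 X))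
          = bind_pmf C (\<lambda>X. map_pmf (\<lambda>a. Y(v := a)) (H (X v)))"
      proof (rule bind_pmf_cong[OF refl])
        fix X assume X: "X \<in> set_pmf C"
        have XG: "X \<in> set_pmf G" using X setC by blast
        have ag: "\<forall>u. u \<noteq> v \<longrightarrow> contr X u = s u" using agreeC[OF X] by (simp add: s_def contr_def)
        have ft: "feasible (tilt \<theta> \<mu>) v (contr X)"
          by (rule feasible_tilt[OF th(1) feasible_of_pos[OF Gsupp[OF XG]]])
        have "cond_site (tilt \<theta> \<mu>) v (contr X) = T" unfolding T_def by (rule cond_site_cong[OF ag ft])
        then show "map_pmf (\<lambda>a. X(v := a)) (D2 X) = map_pmf (\<lambda>a. Y(v := a)) (H (X v))"
          by (simp add: D2_def H_def updC[OF X])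
      qed
      also have "\<dots> = map_pmf (\<lambda>a. Y(v := a)) (bind_pmf (map_pmf (\<lambda>X. X v) C) H)"
        by (simp add: map_bind_pmf bind_map_pmf)
      also have "map_pmf (\<lambda>X. X v) C = cond_site G v Y" using fG by (simp add: cond_site_def C_def)
      finally show ?thesis .
    qed
    have Rn: "R \<noteq> 0" using Rpos by simp
    have E1star: "pmf (cond_site \<pi> v Y) Star = (1 - \<theta>) * m1 / (m0 + m1)"
      by (simp only: pmf_cond_site[OF fpi] sumpi, simp add: piY lp_def m1_def Rn mult_ac)
    have E1zero: "pmf (cond_site \<pi> v Y) Zero = m0 / (m0 + m1)"
      by (simp only: pmf_cond_site[OF fpi] sumpi, simp add: piY lp_def m0_def Rn mult_ac)
    have csG: "pmf (cond_site G v Y) a = pmf G (Y(v := a)) / ((z0 + z1) * R)" for a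
      using fG by (simp add: pmf_cond_site sumG)
    have Tf: "pmf T False = m0 / (m0 + \<theta> * m1)"
      unfolding T_def using pmf_cond_tilt[OF th(1) fmu] by (simp add: m0_def m1_def)
    have E2star: "pmf (bind_pmf (cond_site G v Y) H) Star = (1 - \<theta>) * z1 / (z0 + z1)"
      using Rn by (simp add: pmf_bind_fin sum_spin H_def pmf_map_b01 csG GY lp_def z1_def)
    have cz0: "pmf (cond_site G v Y) Zero = z0 / (z0 + z1)"
    proof -
      have "pmf (cond_site G v Y) Zero = (z0 * R) / ((z0 + z1) * R)" by (simp add: csG GY lp_def z0_def)
      then show ?thesis using Rn by simp
    qed
    have cz1: "pmf (cond_site G v Y) One = (\<theta> * z1) / (z0 + z1)"
    proof -
      have "pmf (cond_site G v Y) One = ((\<theta> * z1) * R) / ((z0 + z1) * R)" by (simp add: csG GY lp_def z1_def mult_ac)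
      then show ?thesis using Rn by simp
    qed
    have E2zero: "pmf (bind_pmf (cond_site G v Y) H) Zero = (z0 + \<theta> * z1) / (z0 + z1) * (m0 / (m0 + \<theta> * m1))"
    proof -
      have "pmf (bind_pmf (cond_site G v Y) H) Zero
          = pmf (cond_site G v Y) Zero * pmf T False + pmf (cond_site G v Y) One * pmf T False"
        by (simp add: pmf_bind_fin sum_spin H_def pmf_map_b01)
      also have "\<dots> = (z0 / (z0 + z1) + (\<theta> * z1) / (z0 + z1)) * pmf T False"
        by (simp add: cz0 cz1 distrib_right)
      finally show ?thesis by (simp add: Tf add_divide_distrib)
    qed
    have cr: "z0 * m1 \<le> z1 * m0"
      using crossZ[of "s(v := False)" "s(v := True)"] by (simp add: le_fun_def z0_def z1_def m0_def m1_def)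
    have mt: "m0 + \<theta> * m1 > 0"
    proof (cases "m0 > 0")
      case False then have "m1 > 0" using mpos nn by auto
      then show ?thesis using nn th by (simp add: add_nonneg_pos)
    qed (use nn th in \<open>simp add: add_pos_nonneg\<close>)
    have i1: "(1 - \<theta>) * m1 / (m0 + m1) \<le> (1 - \<theta>) * z1 / (z0 + z1)"
    proof -
      have "(1 - \<theta>) * (m1 * z0) \<le> (1 - \<theta>) * (z1 * m0)" using cr th by (intro mult_left_mono) (auto simp: mult.commute)
      then have "(1 - \<theta>) * m1 * (z0 + z1) \<le> (1 - \<theta>) * z1 * (m0 + m1)" by (simp add: algebra_simps)
      then show ?thesis using mpos zpos by (simp add: frac_le_iff)
    qed
    have i2: "(z0 + \<theta> * z1) / (z0 + z1) * (m0 / (m0 + \<theta> * m1)) \<le> m0 / (m0 + m1)"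
    proof -
      have "0 \<le> m0 * ((1 - \<theta>) * (z1 * m0 - z0 * m1))" using cr th nn by (intro mult_nonneg_nonneg) auto
      moreover have "m0 * (z0 + z1) * (m0 + \<theta> * m1) - (z0 + \<theta> * z1) * m0 * (m0 + m1)
          = m0 * ((1 - \<theta>) * (z1 * m0 - z0 * m1))" by (simp add: algebra_simps)
      ultimately have "(z0 + \<theta> * z1) * m0 * (m0 + m1) \<le> m0 * ((z0 + z1) * (m0 + \<theta> * m1))" by (simp add: algebra_simps)
      then have "(z0 + \<theta> * z1) * m0 / ((z0 + z1) * (m0 + \<theta> * m1)) \<le> m0 / (m0 + m1)"
        using mpos zpos mt by (simp add: frac_le_iff)
      then show ?thesis by simp
    qed
    have "rel_pmf (\<le>) (cond_site \<pi> v Y) (bind_pmf (cond_site G v Y) H)"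
      by (rule spin_sd) (use E1star E1zero E2star E2zero i1 i2 in simp_all)
    then have "rel_pmf (\<le>) (map_pmf (\<lambda>a. Y(v := a)) (cond_site \<pi> v Y))
        (map_pmf (\<lambda>a. Y(v := a)) (bind_pmf (cond_site G v Y) H))"
      unfolding pmf.rel_map by (rule pmf.rel_mono_strong) (auto simp: le_fun_def)
    then show ?thesis unfolding C_def[symmetric] E1 E2 .
  qed
  have "rel_pmf (\<le>) (bind_pmf W (\<lambda>Y. bind_pmf (cond_pmf G (cyl v Y)) (\<lambda>X. map_pmf (\<lambda>a. X(v := a)) (cond_site \<pi> v X))))
      (bind_pmf W (\<lambda>Y. bind_pmf (cond_pmf G (cyl v Y)) (\<lambda>X. map_pmf (\<lambda>a. X(v := a)) (D2 X))))"
    by (rule rel_pmf_bindI[OF rel_pmf_reflI[of W "\<lambda>Y Y'. Y = Y' \<and> Y \<in> set_pmf W"]]) (auto intro: main)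
  then show ?thesis unfolding W_def disint[symmetric] G_def \<pi>_def D2_def .
qed

lemma key_step:
  fixes \<mu> Z :: "('v::finite \<Rightarrow> bool) pmf"
  assumes th: "0 < \<theta>" "\<theta> < 1" and inv: "inv_dens \<mu> Z"
  shows "rel_pmf (\<le>) (bind_pmf (bind_pmf Z (lift \<theta>)) (gd_step (lifted \<theta> \<mu>)))
                     (bind_pmf (bind_pmf Z (lift \<theta>)) (alg_step \<theta> \<mu>))"
proof -
  have e1: "bind_pmf (bind_pmf Z (lift \<theta>)) (gd_step (lifted \<theta> \<mu>)) = bind_pmf (pmf_of_set UNIV) (\<lambda>v.
      bind_pmf (bind_pmf Z (lift \<theta>)) (\<lambda>X. map_pmf (\<lambda>a. X(v := a)) (cond_site (lifted \<theta> \<mu>) v X)))"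
    unfolding gd_step_def by (rule bind_commute_pmf)
  have e2: "bind_pmf (bind_pmf Z (lift \<theta>)) (alg_step \<theta> \<mu>) = bind_pmf (pmf_of_set UNIV) (\<lambda>v.
      bind_pmf (bind_pmf Z (lift \<theta>)) (\<lambda>X. map_pmf (\<lambda>a. X(v := a))
        (if X v = Star then return_pmf Star else map_pmf b01 (cond_site (tilt \<theta> \<mu>) v (contr X)))))"
    unfolding alg_step_alt by (rule bind_commute_pmf)
  show ?thesis unfolding e1 e2
    by (rule rel_pmf_bindI[OF rel_pmf_reflI[of _ "(=)"]], rule refl, hypsubst, rule key_v[OF th inv])
qed

lemma alg_step_supp:
  fixes \<mu> :: "('v::finite \<Rightarrow> bool) pmf"
  assumes th: "0 < \<theta>" and p: "pmf \<mu> (contr X) > 0" and Y: "Y \<in> set_pmf (alg_step \<theta> \<mu> X)"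
  shows "pmf \<mu> (contr Y) > 0"
proof -
  obtain v where v: "Y \<in> set_pmf (if X v = Star then return_pmf X
     else map_pmf (\<lambda>b. X(v := (if b then One else Zero))) (cond_site (tilt \<theta> \<mu>) v (contr X)))"
    using Y by (auto simp: alg_step_def)
  show ?thesis
  proof (cases "X v = Star")
    case True then show ?thesis using v p by simp
  next
    case False
    then obtain b where b: "b \<in> set_pmf (cond_site (tilt \<theta> \<mu>) v (contr X))"
      "Y = X(v := (if b then One else Zero))" using v by auto
    have ft: "feasible (tilt \<theta> \<mu>) v (contr X)" by (rule feasible_tilt[OF th feasible_of_pos[OF p]])
    have "pmf (tilt \<theta> \<mu>) ((contr X)(v := b)) > 0" by (rule cond_site_supp[OF ft b(1)])
    then have "pmf \<mu> ((contr X)(v := b)) > 0" using pmf_tilt_pos_iff[OF th] by blast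
    moreover have "contr Y = (contr X)(v := b)" using b(2) by (auto simp: contr_def)
    ultimately show ?thesis by simp
  qed
qed

lemma alg_law_supp:
  fixes \<mu> :: "('v::finite \<Rightarrow> bool) pmf"
  assumes th: "0 < \<theta>" "\<theta> < 1" and p1: "pmf \<mu> (\<lambda>_. True) > 0"
  shows "X \<in> set_pmf (alg_law \<theta> \<mu> T2 t) \<Longrightarrow> pmf \<mu> (contr X) > 0"
proof (induction t arbitrary: X)
  case 0
  then have "X \<in> set_pmf (lift \<theta> (\<lambda>_. True))" by simp
  then have "contr X = (\<lambda>_. True)" unfolding set_pmf_lift[OF th] .
  then show ?case using p1 by simp
next
  case (Suc t)
  show ?case
  proof (cases "t mod T2 = 0")
    case True
    have e: "alg_law \<theta> \<mu> T2 (Suc t) = bind_pmf (alg_law \<theta> \<mu> T2 t) (\<lambda>X. bind_pmf (alg_refresh \<theta> X) (alg_step \<theta> \<mu>))"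
      using True by simp
    obtain X1 X2 where x: "X1 \<in> set_pmf (alg_law \<theta> \<mu> T2 t)" "X2 \<in> set_pmf (alg_refresh \<theta> X1)"
      "X \<in> set_pmf (alg_step \<theta> \<mu> X2)" using Suc.prems unfolding e set_bind_pmf by blast
    have "contr X2 = contr X1" using x(2) unfolding alg_refresh_def set_pmf_lift[OF th] .
    moreover have "pmf \<mu> (contr X1) > 0" by (rule Suc.IH[OF x(1)])
    ultimately have "pmf \<mu> (contr X2) > 0" by simp
    then show ?thesis by (rule alg_step_supp[OF th(1) _ x(3)])
  next
    case False
    have e: "alg_law \<theta> \<mu> T2 (Suc t) = bind_pmf (alg_law \<theta> \<mu> T2 t) (alg_step \<theta> \<mu>)"
      using False by simp
    obtain X1 where x: "X1 \<in> set_pmf (alg_law \<theta> \<mu> T2 t)" "X \<in> set_pmf (alg_step \<theta> \<mu> X1)"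
      using Suc.prems unfolding e set_bind_pmf by blast
    have "pmf \<mu> (contr X1) > 0" by (rule Suc.IH[OF x(1)])
    then show ?thesis by (rule alg_step_supp[OF th(1) _ x(2)])
  qed
qed

lemma refresh_G:
  fixes Z :: "('v::finite \<Rightarrow> bool) pmf"
  assumes th: "0 < \<theta>" "\<theta> < 1"
  shows "bind_pmf (bind_pmf Z (lift \<theta>)) (alg_refresh \<theta>) = bind_pmf Z (lift \<theta>)"
proof -
  have "bind_pmf (lift \<theta> z) (alg_refresh \<theta>) = lift \<theta> z" for z :: "'v \<Rightarrow> bool"
  proof -
    have "bind_pmf (lift \<theta> z) (alg_refresh \<theta>) = bind_pmf (lift \<theta> z) (\<lambda>_. lift \<theta> z)"
      by (rule bind_pmf_cong[OF refl]) (simp add: alg_refresh_def set_pmf_lift[OF th])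
    then show ?thesis by simp
  qed
  note eq = this
  have "bind_pmf (bind_pmf Z (lift \<theta>)) (alg_refresh \<theta>) = bind_pmf Z (\<lambda>z. bind_pmf (lift \<theta> z) (alg_refresh \<theta>))"
    by (rule bind_assoc_pmf)
  also have "\<dots> = bind_pmf Z (lift \<theta>)" by (simp only: eq)
  finally show ?thesis .
qed

lemma rel_pmf_le_trans:
  fixes p q r :: "('v \<Rightarrow> spin) pmf"
  assumes "rel_pmf (\<le>) p q" "rel_pmf (\<le>) q r"
  shows "rel_pmf (\<le>) p r"
proof -
  have "(rel_pmf (\<le>) OO rel_pmf (\<le>)) p r" using assms by blast
  then have "rel_pmf ((\<le>) OO (\<le>)) p r" by (simp add: pmf.rel_compp)
  then show ?thesis by (rule pmf.rel_mono_strong) auto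
qed

lemma refresh_supp:
  assumes th: "0 < \<theta>" "\<theta> < 1" and P: "\<forall>X\<in>set_pmf P. pmf \<mu> (contr X) > 0"
    and Y: "Y \<in> set_pmf (bind_pmf P (alg_refresh \<theta>))"
  shows "pmf \<mu> (contr Y) > 0"
proof -
  obtain X0 where x: "X0 \<in> set_pmf P" "Y \<in> set_pmf (alg_refresh \<theta> X0)" using Y by auto
  have "contr Y = contr X0" using x(2) unfolding alg_refresh_def set_pmf_lift[OF th] .
  then show ?thesis using P x(1) by simp
qed

lemma step_mono_bind:
  fixes \<mu> :: "('v::finite \<Rightarrow> bool) pmf"
  assumes mono: "monotone_system \<mu>" and th: "0 < \<theta>" and PQ: "rel_pmf (\<le>) P Q"
    and sP: "\<forall>X\<in>set_pmf P. pmf \<mu> (contr X) > 0" and sQ: "\<forall>X\<in>set_pmf Q. pmf \<mu> (contr X) > 0"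
  shows "rel_pmf (\<le>) (bind_pmf P (alg_step \<theta> \<mu>)) (bind_pmf Q (alg_step \<theta> \<mu>))"
proof (rule rel_pmf_bindI)
  show "rel_pmf (\<lambda>x y. x \<le> y \<and> x \<in> set_pmf P \<and> y \<in> set_pmf Q) P Q"
    by (rule pmf.rel_mono_strong[OF PQ]) auto
next
  fix x y assume "x \<le> y \<and> x \<in> set_pmf P \<and> y \<in> set_pmf Q"
  then show "rel_pmf (\<le>) (alg_step \<theta> \<mu> x) (alg_step \<theta> \<mu> y)"
    using sP sQ by (intro alg_step_mono[OF mono th]) auto
qed

theorem lemma3p3:
  fixes \<mu> :: "('v::finite \<Rightarrow> bool) pmf" and \<theta> :: real and T1 T2 t :: nat
  assumes "monotone_system \<mu>"
    and "0 < \<theta>" and "\<theta> < 1"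
    and "1 \<le> T1" and "1 \<le> T2"
    and "pmf \<mu> (\<lambda>_. True) > 0"
    and "t \<le> T1 * T2"
  shows "rel_pmf (\<le>) (gd_law (lifted \<theta> \<mu>) (lift \<theta> (\<lambda>_. True)) t) (alg_law \<theta> \<mu> T2 t)"
proof -
  note mono = assms(1)
  note th = assms(2,3)
  note p1 = assms(6)
  define Zt where "Zt = (\<lambda>s. gd_law \<mu> (return_pmf (\<lambda>_. True)) s)"
  have repr: "gd_law (lifted \<theta> \<mu>) (lift \<theta> (\<lambda>_. True)) s = bind_pmf (Zt s) (lift \<theta>)" for s
    unfolding Zt_def by (rule gd_repr[OF th p1])
  have inv: "inv_dens \<mu> (Zt s)" for s unfolding Zt_def by (rule inv_gd_law[OF mono p1])
  have suppG: "\<forall>X\<in>set_pmf (bind_pmf (Zt s) (lift \<theta>)). pmf \<mu> (contr X) > 0" for s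
  proof
    fix X assume "X \<in> set_pmf (bind_pmf (Zt s) (lift \<theta>))"
    then have "pmf (Zt s) (contr X) > 0" by (rule G_supp[OF th])
    then show "pmf \<mu> (contr X) > 0" using inv[of s] by (simp add: inv_dens_def)
  qed
  have "rel_pmf (\<le>) (gd_law (lifted \<theta> \<mu>) (lift \<theta> (\<lambda>_. True)) s) (alg_law \<theta> \<mu> T2 s)" for s
  proof (induction s)
    case 0
    show ?case by (simp add: rel_pmf_reflI)
  next
    case (Suc s)
    define G where "G = bind_pmf (Zt s) (lift \<theta>)"
    define A where "A = alg_law \<theta> \<mu> T2 s"
    have IH: "rel_pmf (\<le>) G A" using Suc.IH repr[of s] by (simp add: G_def A_def)
    have gd: "gd_law (lifted \<theta> \<mu>) (lift \<theta> (\<lambda>_. True)) (Suc s) = bind_pmf G (gd_step (lifted \<theta> \<mu>))"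
      using repr[of s] by (simp add: G_def)
    have s1: "rel_pmf (\<le>) (bind_pmf G (gd_step (lifted \<theta> \<mu>))) (bind_pmf G (alg_step \<theta> \<mu>))"
      unfolding G_def by (rule key_step[OF th inv])
    have Gs: "\<forall>X\<in>set_pmf G. pmf \<mu> (contr X) > 0" unfolding G_def by (rule suppG)
    have As: "\<forall>X\<in>set_pmf A. pmf \<mu> (contr X) > 0" unfolding A_def using alg_law_supp[OF th p1] by blast
    have s2: "rel_pmf (\<le>) (bind_pmf G (alg_step \<theta> \<mu>)) (alg_law \<theta> \<mu> T2 (Suc s))"
    proof (cases "s mod T2 = 0")
      case True
      have e: "alg_law \<theta> \<mu> T2 (Suc s) = bind_pmf (bind_pmf A (alg_refresh \<theta>)) (alg_step \<theta> \<mu>)"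
        using True by (simp add: A_def bind_assoc_pmf)
      have g: "bind_pmf G (alg_step \<theta> \<mu>) = bind_pmf (bind_pmf G (alg_refresh \<theta>)) (alg_step \<theta> \<mu>)"
        unfolding G_def refresh_G[OF th] ..
      have r: "rel_pmf (\<le>) (bind_pmf G (alg_refresh \<theta>)) (bind_pmf A (alg_refresh \<theta>))"
        by (rule rel_pmf_bindI[OF IH refresh_mono])
      have sG: "\<forall>X\<in>set_pmf (bind_pmf G (alg_refresh \<theta>)). pmf \<mu> (contr X) > 0"
        using refresh_supp[OF th Gs] by blast
      have sA: "\<forall>X\<in>set_pmf (bind_pmf A (alg_refresh \<theta>)). pmf \<mu> (contr X) > 0"
        using refresh_supp[OF th As] by blast
      show ?thesis unfolding e g by (rule step_mono_bind[OF mono th(1) r sG sA])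
    next
      case False
      have e: "alg_law \<theta> \<mu> T2 (Suc s) = bind_pmf A (alg_step \<theta> \<mu>)"
        using False by (simp add: A_def)
      show ?thesis unfolding e by (rule step_mono_bind[OF mono th(1) IH Gs As])
    qed
    show ?case unfolding gd by (rule rel_pmf_le_trans[OF s1 s2])
  qed
  then show ?thesis .
qed

end
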